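(* Let $\mathcal F_1$ and $\mathcal F_2$ be completely positive maps on $M_D$ with spectral radius $1$, where $\mathcal F_1$ is trace-preserving and $\tau(\mathcal F_1)<1$. Let $\rho_1$ be the unique density matrix with $\mathcal F_1(\rho_1)=\rho_1$. Let $\xi\in M_D$ satisfy $\mathcal F_2^\dagger(\xi)=\xi$, normalised so that $\mathrm{Tr}(\rho_1\xi)=1$. Set $$k=\frac{1+\tau(\mathcal F_1)}{1-\tau(\mathcal F_1)}\,\|\mathcal F_1-\mathcal F_2\|_{1\to1}.$$ If $k<1$, then $$\|\mathbb 1-\xi\|_\infty\le\frac{k}{1-k}.$$
   Context: Notation: $M_D$ is the space of complex $D\times D$ matrices and $\|\cdot\|_p$ is the Schatten $p$-norm ($\|\cdot\|_\infty$ the operator norm). For a linear map $\mathcal F$ on $M_D$, $\|\mathcal F\|_{1\to1}:=\sup_{\sigma\ne0}\|\mathcal F(\sigma)\|_1/\|\sigma\|_1$. The dual map $\mathcal F^\dagger$ is defined by $\mathrm{Tr}(A\,\mathcal F(B))=\mathrm{Tr}(\mathcal F^\dagger(A)B)$ for all $A,B$. The ergodicity coefficient is $\tau(\mathcal F):=\sup\{\|\mathcal F(\sigma)\|_1/\|\sigma\|_1:\ 0\ne\sigma\in M_D,\ \mathrm{Tr}\,\sigma=0\}$. A trace-preserving positive map with $\tau<1$ has a unique fixed density matrix. *)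

theory Defs
  imports "Jordan_Normal_Form.Matrix"
begin

text \<open>Matrices in M_D are complex matrices in carrier_mat D D (Jordan_Normal_Form).
  Linear maps on M_D are functions on complex mat, considered on carrier_mat D D.\<close>

definition mtrace :: "complex mat \<Rightarrow> complex" where
  "mtrace A = (\<Sum>i<dim_row A. A $$ (i,i))"

definition adj :: "complex mat \<Rightarrow> complex mat" where
  "adj A = mat (dim_col A) (dim_row A) (\<lambda>(i,j). cnj (A $$ (j,i)))"

definition vnorm :: "complex vec \<Rightarrow> real" where
  "vnorm v = sqrt (\<Sum>i<dim_vec v. (cmod (v $ i))\<^sup>2)"

definition quad :: "complex mat \<Rightarrow> complex vec \<Rightarrow> complex" where
  "quad A v = (\<Sum>i<dim_vec v. cnj (v $ i) * (A *\<^sub>v v) $ i)"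

definition psd :: "nat \<Rightarrow> complex mat \<Rightarrow> bool" where
  "psd D A \<longleftrightarrow> A \<in> carrier_mat D D \<and> adj A = A \<and>
     (\<forall>v \<in> carrier_vec D. Im (quad A v) = 0 \<and> Re (quad A v) \<ge> 0)"

definition density :: "nat \<Rightarrow> complex mat \<Rightarrow> bool" where
  "density D \<rho> \<longleftrightarrow> psd D \<rho> \<and> mtrace \<rho> = 1"

definition abs_mat :: "complex mat \<Rightarrow> complex mat" where
  "abs_mat A = (THE P. psd (dim_col A) P \<and> P * P = adj A * A)"

definition trace_norm :: "complex mat \<Rightarrow> real" where
  "trace_norm A = Re (mtrace (abs_mat A))"

definition op_norm :: "complex mat \<Rightarrow> real" where
  "op_norm A = Sup {vnorm (A *\<^sub>v v) | v. v \<in> carrier_vec (dim_col A) \<and> vnorm v \<le> 1}"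

definition linear_map_on :: "nat \<Rightarrow> (complex mat \<Rightarrow> complex mat) \<Rightarrow> bool" where
  "linear_map_on D F \<longleftrightarrow>
     (\<forall>A \<in> carrier_mat D D. F A \<in> carrier_mat D D) \<and>
     (\<forall>A \<in> carrier_mat D D. \<forall>B \<in> carrier_mat D D. F (A + B) = F A + F B) \<and>
     (\<forall>c. \<forall>A \<in> carrier_mat D D. F (c \<cdot>\<^sub>m A) = c \<cdot>\<^sub>m F A)"

text \<open>(id_n \<otimes> F) applied to an nD x nD matrix viewed as an n x n block matrix of D x D blocks.\<close>
definition ampl :: "nat \<Rightarrow> nat \<Rightarrow> (complex mat \<Rightarrow> complex mat) \<Rightarrow> complex mat \<Rightarrow> complex mat" where
  "ampl n D F X = mat (n*D) (n*D) (\<lambda>(i,j).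
      F (mat D D (\<lambda>(k,l). X $$ ((i div D)*D + k, (j div D)*D + l))) $$ (i mod D, j mod D))"

definition completely_positive :: "nat \<Rightarrow> (complex mat \<Rightarrow> complex mat) \<Rightarrow> bool" where
  "completely_positive D F \<longleftrightarrow> linear_map_on D F \<and>
     (\<forall>n. \<forall>X. psd (n*D) X \<longrightarrow> psd (n*D) (ampl n D F X))"

definition trace_preserving :: "nat \<Rightarrow> (complex mat \<Rightarrow> complex mat) \<Rightarrow> bool" where
  "trace_preserving D F \<longleftrightarrow> (\<forall>A \<in> carrier_mat D D. mtrace (F A) = mtrace A)"

definition map_eigenvalue :: "nat \<Rightarrow> (complex mat \<Rightarrow> complex mat) \<Rightarrow> complex \<Rightarrow> bool" where
  "map_eigenvalue D F c \<longleftrightarrow> (\<exists>X \<in> carrier_mat D D. X \<noteq> 0\<^sub>m D D \<and> F X = c \<cdot>\<^sub>m X)"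

definition map_spectral_radius :: "nat \<Rightarrow> (complex mat \<Rightarrow> complex mat) \<Rightarrow> real" where
  "map_spectral_radius D F = Sup {cmod c | c. map_eigenvalue D F c}"

definition dual_map :: "nat \<Rightarrow> (complex mat \<Rightarrow> complex mat) \<Rightarrow> complex mat \<Rightarrow> complex mat" where
  "dual_map D F A = (THE G. G \<in> carrier_mat D D \<and>
      (\<forall>B \<in> carrier_mat D D. mtrace (A * F B) = mtrace (G * B)))"

text \<open>Induced 1->1 norm; the set includes 0 (harmless, all ratios are \<ge> 0) so Sup is well defined.\<close>
definition norm_1to1 :: "nat \<Rightarrow> (complex mat \<Rightarrow> complex mat) \<Rightarrow> real" where
  "norm_1to1 D F = Sup (insert 0 {trace_norm (F \<sigma>) / trace_norm \<sigma> | \<sigma>.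
      \<sigma> \<in> carrier_mat D D \<and> \<sigma> \<noteq> 0\<^sub>m D D})"

definition ergodicity_coeff :: "nat \<Rightarrow> (complex mat \<Rightarrow> complex mat) \<Rightarrow> real" where
  "ergodicity_coeff D F = Sup (insert 0 {trace_norm (F \<sigma>) / trace_norm \<sigma> | \<sigma>.
      \<sigma> \<in> carrier_mat D D \<and> \<sigma> \<noteq> 0\<^sub>m D D \<and> mtrace \<sigma> = 0})"

end

theory Submission
  imports Defs "Jordan_Normal_Form.Schur_Decomposition" "HOL-Analysis.L2_Norm"
begin
lemma index_adj[simp]: "i < dim_col A \<Longrightarrow> j < dim_row A \<Longrightarrow> adj A $$ (i,j) = cnj (A $$ (j,i))"
  unfolding adj_def by (rule index_mat(1)[THEN trans]) auto
lemma dim_adj[simp]: "dim_row (adj A) = dim_col A" "dim_col (adj A) = dim_row A"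
  unfolding adj_def by (rule dim_row_mat, rule dim_col_mat)
lemma adj_carrier[simp]: "A \<in> carrier_mat m n \<Longrightarrow> adj A \<in> carrier_mat n m"
  unfolding carrier_mat_def by auto
lemma mult_entry:
  assumes "i < dim_row A" "j < dim_col B" "dim_col A = dim_row B"
  shows "(A * B) $$ (i,j) = (\<Sum>k<dim_col A. A $$ (i,k) * B $$ (k,j))"
  using assms by (simp add: scalar_prod_def atLeast0LessThan)
lemma adj_adj[simp]: "adj (adj A) = A"
  by (rule eq_matI) auto
lemma adj_mult: assumes "dim_col A = dim_row B" shows "adj (A * B) = adj B * adj A"
  by (rule eq_matI) (use assms in \<open>auto simp: mult_entry mult.commute simp del: index_mult_mat(1)\<close>)
lemma adj_one[simp]: "adj (1\<^sub>m n) = 1\<^sub>m n"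
  by (rule eq_matI) auto
lemma adj_zero[simp]: "adj (0\<^sub>m n m) = 0\<^sub>m m n"
  by (rule eq_matI) auto
lemma adj_add: assumes "A \<in> carrier_mat m n" "B \<in> carrier_mat m n" shows "adj (A + B) = adj A + adj B"
  by (rule eq_matI) (use assms in auto)
lemma adj_minus: assumes "A \<in> carrier_mat m n" "B \<in> carrier_mat m n" shows "adj (A - B) = adj A - adj B"
  by (rule eq_matI) (use assms in auto)
lemma adj_smult: "adj (c \<cdot>\<^sub>m A) = cnj c \<cdot>\<^sub>m adj A"
  by (rule eq_matI) auto

lemma mtrace_cyclic: assumes "A \<in> carrier_mat m n" "B \<in> carrier_mat n m"
  shows "mtrace (A * B) = mtrace (B * A)"
proof -
  have "mtrace (A * B) = (\<Sum>i<m. \<Sum>k<n. A $$ (i,k) * B $$ (k,i))"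
    using assms by (simp add: mtrace_def mult_entry del: index_mult_mat(1))
  also have "\<dots> = (\<Sum>k<n. \<Sum>i<m. B $$ (k,i) * A $$ (i,k))"
    by (subst sum.swap) (simp add: mult.commute)
  also have "\<dots> = mtrace (B * A)"
    using assms by (simp add: mtrace_def mult_entry del: index_mult_mat(1))
  finally show ?thesis .
qed

lemma mtrace_add: "A \<in> carrier_mat n n \<Longrightarrow> B \<in> carrier_mat n n \<Longrightarrow> mtrace (A + B) = mtrace A + mtrace B"
  by (simp add: mtrace_def sum.distrib)
lemma mtrace_minus: "A \<in> carrier_mat n n \<Longrightarrow> B \<in> carrier_mat n n \<Longrightarrow> mtrace (A - B) = mtrace A - mtrace B"
  by (simp add: mtrace_def sum_subtractf)
lemma mtrace_smult: "A \<in> carrier_mat n n \<Longrightarrow> mtrace (c \<cdot>\<^sub>m A) = c * mtrace A"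
  unfolding mtrace_def sum_distrib_left by (rule sum.cong) auto
lemma mtrace_one: "mtrace (1\<^sub>m n) = of_nat n"
  by (simp add: mtrace_def)
lemma mtrace_zero: "mtrace (0\<^sub>m n n) = 0"
  by (simp add: mtrace_def)

definition ip :: "complex vec \<Rightarrow> complex vec \<Rightarrow> complex" where
  "ip u v = (\<Sum>i<dim_vec v. cnj (u $ i) * v $ i)"

lemma mult_vec_entry: "i < dim_row A \<Longrightarrow> dim_vec v = dim_col A \<Longrightarrow>
   (A *\<^sub>v v) $ i = (\<Sum>k<dim_col A. A $$ (i,k) * v $ k)"
  by (simp add: scalar_prod_def atLeast0LessThan)

lemma vnorm_L2: "vnorm v = L2_set (\<lambda>i. cmod (v $ i)) {..<dim_vec v}"
  by (simp add: vnorm_def L2_set_def)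

lemma vnorm_nonneg: "vnorm v \<ge> 0" by (simp add: vnorm_def sum_nonneg)

lemma cnj_mult_self: "cnj a * a = complex_of_real ((cmod a)^2)"
  using complex_norm_square[of a] by (simp add: mult.commute)

lemma ip_self: "ip v v = complex_of_real (vnorm v ^ 2)"
proof -
  have "ip v v = (\<Sum>i<dim_vec v. complex_of_real ((cmod (v $ i))^2))"
    unfolding ip_def by (rule sum.cong) (auto simp: cnj_mult_self)
  also have "\<dots> = complex_of_real (\<Sum>i<dim_vec v. (cmod (v $ i))^2)" by simp
  also have "(\<Sum>i<dim_vec v. (cmod (v $ i))^2) = vnorm v ^ 2"
    unfolding vnorm_def by (subst real_sqrt_pow2) (auto simp: sum_nonneg)
  finally show ?thesis .
qed

lemma cauchy_schwarz: assumes "dim_vec u = dim_vec v"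
  shows "cmod (ip u v) \<le> vnorm u * vnorm v"
proof -
  have "cmod (ip u v) \<le> (\<Sum>i<dim_vec v. cmod (cnj (u $ i) * v $ i))"
    unfolding ip_def by (rule norm_sum)
  also have "\<dots> = (\<Sum>i<dim_vec v. \<bar>cmod (u $ i)\<bar> * \<bar>cmod (v $ i)\<bar>)"
    by (simp add: norm_mult)
  also have "\<dots> \<le> L2_set (\<lambda>i. cmod (u $ i)) {..<dim_vec v} * L2_set (\<lambda>i. cmod (v $ i)) {..<dim_vec v}"
    by (rule L2_set_mult_ineq)
  finally show ?thesis using assms by (simp add: vnorm_L2)
qed

lemma vnorm_zero_iff: "vnorm v = 0 \<longleftrightarrow> v = 0\<^sub>v (dim_vec v)"
proof
  assume "vnorm v = 0"
  hence "(\<Sum>i<dim_vec v. (cmod (v $ i))^2) = 0" unfolding vnorm_def by simp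
  hence "\<forall>i\<in>{..<dim_vec v}. (cmod (v $ i))^2 = 0"
    by (subst (asm) sum_nonneg_eq_0_iff) auto
  thus "v = 0\<^sub>v (dim_vec v)" by (intro eq_vecI) auto
next
  assume "v = 0\<^sub>v (dim_vec v)"
  then have "\<forall>i<dim_vec v. v$i = 0" by (metis index_zero_vec(1))
  thus "vnorm v = 0" by (simp add: vnorm_def)
qed

lemma vnorm_smult: "vnorm (c \<cdot>\<^sub>v v) = cmod c * vnorm v"
proof -
  have "vnorm (c \<cdot>\<^sub>v v) = sqrt ((cmod c)^2 * (\<Sum>i<dim_vec v. (cmod (v $ i))^2))"
    unfolding vnorm_def by (simp add: norm_mult power_mult_distrib sum_distrib_left)
  thus ?thesis by (simp add: real_sqrt_mult vnorm_def)
qed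

lemma ip_mult_adj: assumes "A \<in> carrier_mat m n" "u \<in> carrier_vec m" "v \<in> carrier_vec n"
  shows "ip u (A *\<^sub>v v) = ip (adj A *\<^sub>v u) v"
proof -
  have "ip u (A *\<^sub>v v) = (\<Sum>i<m. \<Sum>k<n. cnj (u $ i) * (A $$ (i,k) * v $ k))"
    unfolding ip_def using assms by (simp add: mult_vec_entry sum_distrib_left del: index_mult_mat_vec)
  also have "\<dots> = (\<Sum>k<n. \<Sum>i<m. cnj (u $ i) * (A $$ (i,k) * v $ k))"
    by (rule sum.swap)
  also have "\<dots> = ip (adj A *\<^sub>v u) v"
    unfolding ip_def using assms
    by (simp add: mult_vec_entry sum_distrib_left mult_ac del: index_mult_mat_vec)
  finally show ?thesis .
qed

lemma quad_ip: "quad A v = ip v (A *\<^sub>v v)" if "A \<in> carrier_mat n n" "v \<in> carrier_vec n"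
  using that by (simp add: quad_def ip_def)

definition unitary :: "nat \<Rightarrow> complex mat \<Rightarrow> bool" where
  "unitary n U \<longleftrightarrow> U \<in> carrier_mat n n \<and> adj U * U = 1\<^sub>m n \<and> U * adj U = 1\<^sub>m n"

definition dmat :: "nat \<Rightarrow> (nat \<Rightarrow> real) \<Rightarrow> complex mat" where
  "dmat n f = mat n n (\<lambda>(i,j). if i = j then complex_of_real (f i) else 0)"

lemma dmat_carrier[simp]: "dmat n f \<in> carrier_mat n n" by (simp add: dmat_def)
lemma dmat_index[simp]: "i < n \<Longrightarrow> j < n \<Longrightarrow> dmat n f $$ (i,j) = (if i = j then complex_of_real (f i) else 0)"
  by (simp add: dmat_def)
lemma dmat_dim[simp]: "dim_row (dmat n f) = n" "dim_col (dmat n f) = n" by (simp_all add: dmat_def)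

lemma unitary_from_left: assumes "U \<in> carrier_mat n n" "adj U * U = 1\<^sub>m n" shows "unitary n U"
  using assms mat_mult_left_right_inverse[of "adj U" n U] unfolding unitary_def by auto

lemma eigen_exists: assumes A: "(A :: complex mat) \<in> carrier_mat (Suc n) (Suc n)"
  shows "\<exists>e v. v \<in> carrier_vec (Suc n) \<and> v \<noteq> 0\<^sub>v (Suc n) \<and> A *\<^sub>v v = e \<cdot>\<^sub>v v"
proof -
  obtain as where cp: "char_poly A = (\<Prod>a\<leftarrow>as. [:- a, 1:])" and len: "length as = Suc n"
    using char_poly_factorized[OF A] by blast
  then obtain a as' where as: "as = a # as'" by (cases as) auto
  have "poly (char_poly A) a = 0" unfolding cp as by simp
  hence "eigenvalue A a" using eigenvalue_root_char_poly[OF A] by simp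
  from find_eigenvector[OF A this] show ?thesis unfolding eigenvector_def using A by auto
qed

lemma orth_basis_with: assumes v: "(v :: complex vec) \<in> carrier_vec n" and v0: "v \<noteq> 0\<^sub>v n"
  shows "\<exists>ws. set ws \<subseteq> carrier_vec n \<and> corthogonal ws \<and> length ws = n \<and> hd ws = v"
proof -
  interpret cof_vec_space n "TYPE(complex)" .
  define b where "b = basis_completion v"
  define ws where "ws = gram_schmidt n b"
  from basis_completion[OF v v0, folded b_def]
  have span_b: "span (set b) = carrier_vec n" and dist_b: "distinct b" 
    and indep: "\<not> lin_dep (set b)" and b: "set b \<subseteq> carrier_vec n" and hdb: "hd b = v" 
    and len_b: "length b = n" by auto
  from v v0 have n: "n \<noteq> 0" by (cases n) auto
  from hdb len_b n obtain vs where bv: "b = v # vs" by (cases b, auto)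
  from gram_schmidt_result[OF b dist_b indep refl, folded ws_def]
  have ws: "set ws \<subseteq> carrier_vec n" "corthogonal ws" "length ws = n" 
    by (auto simp: len_b)
  from gram_schmidt_hd[OF v, of vs, folded bv] have hdws: "hd ws = v" unfolding ws_def .
  show ?thesis using ws hdws by blast
qed

lemma cscalar_ip: assumes "dim_vec u = dim_vec w" shows "w \<bullet>c u = ip u w"
  unfolding scalar_prod_def ip_def using assms
  by (auto simp: atLeast0LessThan mult.commute intro!: sum.cong)

lemma unitary_of_orth:
  assumes ws: "set ws \<subseteq> carrier_vec n" "corthogonal ws" "length ws = n"
  defines "U \<equiv> mat n n (\<lambda>(i,j). ws ! j $ i / complex_of_real (vnorm (ws ! j)))"
  shows "unitary n U"
proof -
  have U: "U \<in> carrier_mat n n" unfolding U_def by simp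
  have wsc: "j < n \<Longrightarrow> ws ! j \<in> carrier_vec n" for j using ws by auto
  have r0: "vnorm (ws ! j) \<noteq> 0" if j: "j < n" for j
  proof
    assume "vnorm (ws ! j) = 0"
    hence "ip (ws ! j) (ws ! j) = 0" by (simp add: ip_self)
    moreover have "ws ! j \<bullet>c ws ! j \<noteq> 0" using ws j corthogonalD[of ws j j] by auto
    ultimately show False by (simp add: cscalar_ip)
  qed
  have "adj U * U = 1\<^sub>m n"
  proof (rule eq_matI)
    fix i j assume i: "i < dim_row (1\<^sub>m n)" and j: "j < dim_col (1\<^sub>m n)"
    hence i: "i < n" and j: "j < n" by auto
    have "(adj U * U) $$ (i,j) = (\<Sum>k<n. cnj (ws ! i $ k) * ws ! j $ k) /
        (complex_of_real (vnorm (ws ! i)) * complex_of_real (vnorm (ws ! j)))"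
      using i j U unfolding U_def
      by (simp add: mult_entry sum_divide_distrib del: index_mult_mat(1))
    also have "(\<Sum>k<n. cnj (ws ! i $ k) * ws ! j $ k) = ip (ws ! i) (ws ! j)"
      unfolding ip_def using wsc[OF j] by simp
    also have "ip (ws ! i) (ws ! j) = ws ! j \<bullet>c ws ! i"
      using wsc[OF i] wsc[OF j] by (simp add: cscalar_ip)
    finally have e: "(adj U * U) $$ (i,j) = ws ! j \<bullet>c ws ! i /
        (complex_of_real (vnorm (ws ! i)) * complex_of_real (vnorm (ws ! j)))" .
    show "(adj U * U) $$ (i,j) = 1\<^sub>m n $$ (i,j)"
    proof (cases "i = j")
      case True
      have "ws ! j \<bullet>c ws ! i = complex_of_real (vnorm (ws ! i))^2"
        using True wsc[OF i] by (simp add: cscalar_ip ip_self)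
      thus ?thesis unfolding e using True i r0[OF i] by (simp add: power2_eq_square)
    next
      case False
      hence "ws ! j \<bullet>c ws ! i = 0" using ws i j corthogonalD[of ws j i] by auto
      thus ?thesis unfolding e using False i j by simp
    qed
  qed (use U in auto)
  thus ?thesis using unitary_from_left U by blast
qed

lemma spectral:
  fixes A :: "complex mat"
  assumes "A \<in> carrier_mat n n" "adj A = A"
  shows "\<exists>U lam. unitary n U \<and> A * U = U * dmat n lam"
  using assms
proof (induction n arbitrary: A)
  case 0
  show ?case
    by (rule exI[of _ "1\<^sub>m 0"], rule exI[of _ "\<lambda>_. 0"])
       (use 0 in \<open>auto simp: unitary_def intro!: eq_matI\<close>)
next
  case (Suc n)
  note A = Suc.prems(1) and herm = Suc.prems(2)
  obtain e v where v: "v \<in> carrier_vec (Suc n)" "v \<noteq> 0\<^sub>v (Suc n)" and Av: "A *\<^sub>v v = e \<cdot>\<^sub>v v"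
    using eigen_exists[OF A] by blast
  obtain ws where ws: "set ws \<subseteq> carrier_vec (Suc n)" "corthogonal ws" "length ws = Suc n" "hd ws = v"
    using orth_basis_with[OF v] by blast
  define U1 where "U1 = mat (Suc n) (Suc n) (\<lambda>(i,j). ws ! j $ i / complex_of_real (vnorm (ws ! j)))"
  have U1u: "unitary (Suc n) U1" unfolding U1_def by (rule unitary_of_orth[OF ws(1-3)])
  hence U1: "U1 \<in> carrier_mat (Suc n) (Suc n)" and U1i: "adj U1 * U1 = 1\<^sub>m (Suc n)"
    and U1i': "U1 * adj U1 = 1\<^sub>m (Suc n)" unfolding unitary_def by auto
  have ws0: "ws ! 0 = v" using ws(3,4) by (cases ws) auto
  have U1col: "U1 $$ (k,0) = v $ k / complex_of_real (vnorm v)" if "k < Suc n" for k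
    using that ws0 unfolding U1_def by simp
  have AU1col: "(A * U1) $$ (k,0) = e * U1 $$ (k,0)" if k: "k < Suc n" for k
  proof -
    have "(A * U1) $$ (k,0) = (\<Sum>l<Suc n. A $$ (k,l) * v $ l) / complex_of_real (vnorm v)"
      using A U1 k U1col by (simp add: mult_entry sum_divide_distrib del: index_mult_mat(1) sum.lessThan_Suc)
    also have "(\<Sum>l<Suc n. A $$ (k,l) * v $ l) = (A *\<^sub>v v) $ k"
      using A v k by (simp add: mult_vec_entry del: index_mult_mat_vec)
    also have "\<dots> = e * v $ k" using Av v k by simp
    finally show ?thesis using U1col[OF k] by simp
  qed
  define A' where "A' = adj U1 * A * U1"
  have A'c: "A' \<in> carrier_mat (Suc n) (Suc n)" unfolding A'_def using A U1 by auto
  have A'h: "adj A' = A'"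
    unfolding A'_def using A U1 herm
    by (simp add: adj_mult assoc_mult_mat[of _ "Suc n" "Suc n" _ "Suc n" _ "Suc n"])
  have A'col: "A' $$ (i,0) = (if i = 0 then e else 0)" if i: "i < Suc n" for i
  proof -
    have "A' = adj U1 * (A * U1)" unfolding A'_def using A U1 by (metis assoc_mult_mat adj_carrier)
    hence "A' $$ (i,0) = (\<Sum>k<Suc n. adj U1 $$ (i,k) * (A * U1) $$ (k,0))"
      using A U1 i by (simp add: mult_entry del: index_mult_mat(1))
    also have "\<dots> = e * (\<Sum>k<Suc n. adj U1 $$ (i,k) * U1 $$ (k,0))"
      using AU1col by (simp add: sum_distrib_left mult_ac del: sum.lessThan_Suc)
    also have "(\<Sum>k<Suc n. adj U1 $$ (i,k) * U1 $$ (k,0)) = (adj U1 * U1) $$ (i,0)"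
      using U1 i by (simp add: mult_entry del: index_mult_mat(1))
    also have "\<dots> = (if i = 0 then 1 else 0)" using U1i i by simp
    finally show ?thesis by simp
  qed
  have A'row: "A' $$ (0,j) = (if j = 0 then e else 0)" if j: "j < Suc n" for j
  proof -
    have "A' $$ (0,j) = cnj (A' $$ (j,0))"
      using A'h j A'c by (metis carrier_matD index_adj zero_less_Suc)
    thus ?thesis using A'col[OF j] by (cases "j = 0") auto
  qed
  have ereal: "cnj e = e"
    using A'h A'c A'col[of 0] by (metis carrier_matD index_adj zero_less_Suc)
  define A3 where "A3 = mat n n (\<lambda>(i,j). A' $$ (Suc i, Suc j))"
  have A3c: "A3 \<in> carrier_mat n n" unfolding A3_def by simp
  have A3h: "adj A3 = A3"
  proof (rule eq_matI)
    fix i j assume "i < dim_row A3" "j < dim_col A3"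
    hence i: "i < n" and j: "j < n" unfolding A3_def by auto
    have "adj A' $$ (Suc i, Suc j) = cnj (A' $$ (Suc j, Suc i))" using A'c i j by simp
    thus "adj A3 $$ (i,j) = A3 $$ (i,j)" using i j A'h unfolding A3_def by simp
  qed (auto simp: A3_def)
  obtain U3 lam3 where U3u: "unitary n U3" and A3U3: "A3 * U3 = U3 * dmat n lam3"
    using Suc.IH[OF A3c A3h] by blast
  hence U3: "U3 \<in> carrier_mat n n" and U3i: "adj U3 * U3 = 1\<^sub>m n" unfolding unitary_def by auto
  define V where "V = mat (Suc n) (Suc n) (\<lambda>(i,j). if i = 0 \<and> j = 0 then 1 else
       if i = 0 \<or> j = 0 then 0 else U3 $$ (i - 1, j - 1))"
  define lam where "lam = (\<lambda>i. if i = 0 then Re e else lam3 (i - 1))"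
  have Vc: "V \<in> carrier_mat (Suc n) (Suc n)" unfolding V_def by simp
  have VV: "adj V * V = 1\<^sub>m (Suc n)"
  proof (rule eq_matI)
    fix i j assume "i < dim_row (1\<^sub>m (Suc n))" "j < dim_col (1\<^sub>m (Suc n))"
    hence i: "i < Suc n" and j: "j < Suc n" by auto
    have "(adj V * V) $$ (i,j) = (\<Sum>k<Suc n. cnj (V $$ (k,i)) * V $$ (k,j))"
      using Vc i j by (simp add: mult_entry del: index_mult_mat(1))
    also have "\<dots> = cnj (V $$ (0,i)) * V $$ (0,j) + (\<Sum>k<n. cnj (V $$ (Suc k,i)) * V $$ (Suc k,j))"
      by (rule sum.lessThan_Suc_shift)
    also have "\<dots> = 1\<^sub>m (Suc n) $$ (i,j)"
    proof (cases i)
      case 0 thus ?thesis using i j unfolding V_def by auto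
    next
      case (Suc i')
      show ?thesis
      proof (cases j)
        case 0 thus ?thesis using i j Suc unfolding V_def by auto
      next
        case (Suc j')
        have "(\<Sum>k<n. cnj (V $$ (Suc k,i)) * V $$ (Suc k,j)) = (\<Sum>k<n. cnj (U3 $$ (k,i')) * U3 $$ (k,j'))"
          using i j \<open>i = Suc i'\<close> Suc unfolding V_def by (intro sum.cong) auto
        also have "\<dots> = (adj U3 * U3) $$ (i',j')"
          using U3 i j \<open>i = Suc i'\<close> Suc by (simp add: mult_entry del: index_mult_mat(1))
        finally show ?thesis using U3i i j \<open>i = Suc i'\<close> Suc unfolding V_def by auto
      qed
    qed
    finally show "(adj V * V) $$ (i,j) = 1\<^sub>m (Suc n) $$ (i,j)" .
  qed (use Vc in auto)
  have A'V: "A' * V = V * dmat (Suc n) lam"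
  proof (rule eq_matI)
    fix i j assume "i < dim_row (V * dmat (Suc n) lam)" "j < dim_col (V * dmat (Suc n) lam)"
    hence i: "i < Suc n" and j: "j < Suc n" using Vc by auto
    have l: "(A' * V) $$ (i,j) = A' $$ (i,0) * V $$ (0,j) + (\<Sum>k<n. A' $$ (i,Suc k) * V $$ (Suc k,j))"
    proof -
      have "(A' * V) $$ (i,j) = (\<Sum>k<Suc n. A' $$ (i,k) * V $$ (k,j))"
        using A'c Vc i j by (simp add: mult_entry del: index_mult_mat(1) sum.lessThan_Suc)
      thus ?thesis by (simp only: sum.lessThan_Suc_shift)
    qed
    have r: "(V * dmat (Suc n) lam) $$ (i,j) = V $$ (i,0) * dmat (Suc n) lam $$ (0,j)
       + (\<Sum>k<n. V $$ (i,Suc k) * dmat (Suc n) lam $$ (Suc k,j))"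
    proof -
      have "(V * dmat (Suc n) lam) $$ (i,j) = (\<Sum>k<Suc n. V $$ (i,k) * dmat (Suc n) lam $$ (k,j))"
        using Vc i j by (simp add: mult_entry del: index_mult_mat(1) sum.lessThan_Suc)
      thus ?thesis by (simp only: sum.lessThan_Suc_shift)
    qed
    show "(A' * V) $$ (i,j) = (V * dmat (Suc n) lam) $$ (i,j)"
    proof (cases j)
      case 0
      have "(\<Sum>k<n. A' $$ (i,Suc k) * V $$ (Suc k,j)) = 0" using 0 unfolding V_def by simp
      moreover have "(\<Sum>k<n. V $$ (i,Suc k) * dmat (Suc n) lam $$ (Suc k,j)) = 0" using 0 by simp
      ultimately show ?thesis unfolding l r using 0 i A'col[OF i] ereal
        unfolding V_def lam_def by (cases "i = 0") (auto simp: complex_eq_iff)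
    next
      case (Suc j')
      show ?thesis
      proof (cases i)
        case 0
        have "(\<Sum>k<n. A' $$ (i,Suc k) * V $$ (Suc k,j)) = 0" using 0 A'row by simp
        moreover have "(\<Sum>k<n. V $$ (i,Suc k) * dmat (Suc n) lam $$ (Suc k,j)) = 0"
          using 0 unfolding V_def by simp
        ultimately show ?thesis unfolding l r using 0 Suc j unfolding V_def by simp
      next
        case (Suc i')
        have "(\<Sum>k<n. A' $$ (i,Suc k) * V $$ (Suc k,j)) = (\<Sum>k<n. A3 $$ (i',k) * U3 $$ (k,j'))"
          using i j Suc \<open>j = Suc j'\<close> unfolding V_def A3_def by (intro sum.cong) auto
        also have "\<dots> = (A3 * U3) $$ (i',j')"
          using A3c U3 i j Suc \<open>j = Suc j'\<close> by (simp add: mult_entry del: index_mult_mat(1))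
        also have "\<dots> = (U3 * dmat n lam3) $$ (i',j')" by (simp add: A3U3)
        also have "\<dots> = (\<Sum>k<n. U3 $$ (i',k) * dmat n lam3 $$ (k,j'))"
          using U3 i j Suc \<open>j = Suc j'\<close> by (simp add: mult_entry del: index_mult_mat(1))
        also have "\<dots> = (\<Sum>k<n. V $$ (i,Suc k) * dmat (Suc n) lam $$ (Suc k,j))"
          using i j Suc \<open>j = Suc j'\<close> unfolding V_def lam_def by (intro sum.cong) auto
        finally show ?thesis unfolding l r using Suc \<open>j = Suc j'\<close> i j unfolding V_def by simp
      qed
    qed
  qed (use A'c Vc in auto)
  define U where "U = U1 * V"
  have Uc: "U \<in> carrier_mat (Suc n) (Suc n)" unfolding U_def using U1 Vc by auto
  have "adj U * U = adj V * (adj U1 * (U1 * V))"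
    unfolding U_def using U1 Vc by (simp add: adj_mult) (metis assoc_mult_mat adj_carrier mult_carrier_mat)
  also have "adj U1 * (U1 * V) = V" using U1 Vc U1i by (metis assoc_mult_mat adj_carrier left_mult_one_mat)
  also have "adj V * V = 1\<^sub>m (Suc n)" using VV .
  finally have Uu: "unitary (Suc n) U" using unitary_from_left[OF Uc] by blast
  have A'2: "A' = adj U1 * (A * U1)" unfolding A'_def using A U1 by (metis assoc_mult_mat adj_carrier)
  have "U1 * A' = (U1 * adj U1) * (A * U1)" unfolding A'2
    using A U1 by (metis assoc_mult_mat adj_carrier mult_carrier_mat)
  hence AU1: "A * U1 = U1 * A'" using U1i' A U1 by simp
  have "A * U = (A * U1) * V" unfolding U_def using A U1 Vc by (metis assoc_mult_mat)
  also have "\<dots> = U1 * (A' * V)" unfolding AU1 using A'c U1 Vc by (metis assoc_mult_mat)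
  also have "\<dots> = U * dmat (Suc n) lam" unfolding A'V U_def using U1 Vc
    by (metis assoc_mult_mat dmat_carrier)
  finally show ?case using Uu by blast
qed

lemma ip_smult_right: "ip u (c \<cdot>\<^sub>v v) = c * ip u v"
  by (simp add: ip_def sum_distrib_left mult_ac)
lemma ip_smult_left: "dim_vec u = dim_vec v \<Longrightarrow> ip (c \<cdot>\<^sub>v u) v = cnj c * ip u v"
  by (simp add: ip_def sum_distrib_left mult_ac)
lemma ip_cnj: "dim_vec u = dim_vec v \<Longrightarrow> cnj (ip u v) = ip v u"
  by (simp add: ip_def mult.commute)

lemma ip_col: assumes "U \<in> carrier_mat n m" "W \<in> carrier_mat n m'" "i < m" "j < m'"
  shows "ip (col U i) (col W j) = (adj U * W) $$ (i,j)"
  using assms by (simp add: ip_def mult_entry del: index_mult_mat(1))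

lemma sandwich_entry: assumes "U \<in> carrier_mat n m" "B \<in> carrier_mat n n" "W \<in> carrier_mat n m'"
  "i < m" "j < m'"
  shows "(adj U * B * W) $$ (i,j) = ip (col U i) (B *\<^sub>v col W j)"
proof -
  have "adj U * B * W = adj U * (B * W)" using assms by (metis assoc_mult_mat adj_carrier)
  hence "(adj U * B * W) $$ (i,j) = ip (col U i) (col (B * W) j)"
    using assms ip_col[of U n m "B * W" m' i j] by simp
  also have "col (B * W) j = B *\<^sub>v col W j" by (rule col_mult2) (use assms in auto)
  finally show ?thesis .
qed

lemma dmat_mult: "dmat n f * dmat n g = dmat n (\<lambda>i. f i * g i)"
proof (rule eq_matI)
  fix i j assume "i < dim_row (dmat n (\<lambda>i. f i * g i))" "j < dim_col (dmat n (\<lambda>i. f i * g i))"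
  hence i: "i < n" and j: "j < n" by auto
  have "(dmat n f * dmat n g) $$ (i,j) = (\<Sum>k<n. dmat n f $$ (i,k) * dmat n g $$ (k,j))"
    using i j by (simp add: mult_entry del: index_mult_mat(1))
  also have "\<dots> = (\<Sum>k\<in>{i}. dmat n f $$ (i,k) * dmat n g $$ (k,j))"
    by (rule sum.mono_neutral_right) (use i j in auto)
  finally show "(dmat n f * dmat n g) $$ (i,j) = dmat n (\<lambda>i. f i * g i) $$ (i,j)" using i j by simp
qed auto

lemma adj_dmat[simp]: "adj (dmat n f) = dmat n f"
  by (rule eq_matI) auto

lemma mtrace_dmat: "mtrace (dmat n f) = complex_of_real (\<Sum>i<n. f i)"
  by (simp add: mtrace_def)

lemma ip_dmat: assumes "w \<in> carrier_vec n"
  shows "ip w (dmat n f *\<^sub>v w) = complex_of_real (\<Sum>i<n. f i * (cmod (w $ i))^2)"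
proof -
  have "(dmat n f *\<^sub>v w) $ i = f i * w $ i" if "i < n" for i
  proof -
    have "(dmat n f *\<^sub>v w) $ i = (\<Sum>k<n. dmat n f $$ (i,k) * w $ k)"
      using that assms by (simp add: mult_vec_entry del: index_mult_mat_vec)
    also have "\<dots> = (\<Sum>k\<in>{i}. dmat n f $$ (i,k) * w $ k)"
      by (rule sum.mono_neutral_right) (use that in auto)
    finally show ?thesis using that by simp
  qed
  hence "ip w (dmat n f *\<^sub>v w) = (\<Sum>i<n. complex_of_real (f i) * (cnj (w $ i) * w $ i))"
    unfolding ip_def using assms by (auto intro!: sum.cong simp: mult_ac)
  also have "\<dots> = complex_of_real (\<Sum>i<n. f i * (cmod (w $ i))^2)"
    by (simp add: cnj_mult_self)
  finally show ?thesis .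
qed

lemma vnorm_unitary: assumes "unitary n U" "v \<in> carrier_vec n"
  shows "vnorm (U *\<^sub>v v) = vnorm v"
proof -
  have U: "U \<in> carrier_mat n n" "adj U * U = 1\<^sub>m n" using assms unfolding unitary_def by auto
  have "complex_of_real (vnorm (U *\<^sub>v v) ^ 2) = ip (U *\<^sub>v v) (U *\<^sub>v v)" by (simp add: ip_self)
  also have "\<dots> = ip (adj U *\<^sub>v (U *\<^sub>v v)) v" using U assms by (simp add: ip_mult_adj)
  also have "adj U *\<^sub>v (U *\<^sub>v v) = v" using U assms
    by (metis adj_carrier assoc_mult_mat_vec one_mult_mat_vec)
  also have "ip v v = complex_of_real (vnorm v ^ 2)" by (simp add: ip_self)
  finally have "vnorm (U *\<^sub>v v) ^ 2 = vnorm v ^ 2" by (simp only: of_real_eq_iff)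
  thus ?thesis using vnorm_nonneg by (simp add: power2_eq_iff_nonneg)
qed

lemma col_unit: assumes "unitary n U" "i < n" shows "vnorm (col U i) = 1"
proof -
  have U: "U \<in> carrier_mat n n" "adj U * U = 1\<^sub>m n" using assms unfolding unitary_def by auto
  have "complex_of_real (vnorm (col U i) ^ 2) = ip (col U i) (col U i)" by (simp add: ip_self)
  also have "\<dots> = 1" using ip_col[OF U(1) U(1) assms(2) assms(2)] U assms by simp
  finally have "vnorm (col U i) ^ 2 = 1" by (metis of_real_eq_1_iff)
  thus ?thesis using vnorm_nonneg[of "col U i"] by (auto simp: power2_eq_1_iff)
qed

lemma eig_col: assumes U: "U \<in> carrier_mat n n" and M: "M \<in> carrier_mat n n"
  and MU: "M * U = U * dmat n lam" and i: "i < n"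
  shows "M *\<^sub>v col U i = complex_of_real (lam i) \<cdot>\<^sub>v col U i"
proof -
  have "M *\<^sub>v col U i = col (M * U) i" by (rule col_mult2[symmetric]) (use U M i in auto)
  also have "\<dots> = col (U * dmat n lam) i" by (simp add: MU)
  also have "\<dots> = complex_of_real (lam i) \<cdot>\<^sub>v col U i"
  proof (rule eq_vecI)
    fix k assume "k < dim_vec (complex_of_real (lam i) \<cdot>\<^sub>v col U i)"
    hence k: "k < n" using U by simp
    have "col (U * dmat n lam) i $ k = (\<Sum>l<n. U $$ (k,l) * dmat n lam $$ (l,i))"
      using U i k by (simp add: mult_entry del: index_mult_mat(1))
    also have "\<dots> = (\<Sum>l\<in>{i}. U $$ (k,l) * dmat n lam $$ (l,i))"
      by (rule sum.mono_neutral_right) (use i in auto)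
    finally show "col (U * dmat n lam) i $ k = (complex_of_real (lam i) \<cdot>\<^sub>v col U i) $ k"
      using U i k by simp
  qed (use U in auto)
  finally show ?thesis .
qed

lemma eig_value_norm: assumes U: "unitary n U" and B: "B \<in> carrier_mat n n"
  and MU: "adj B * B * U = U * dmat n lam" and i: "i < n"
  shows "lam i = vnorm (B *\<^sub>v col U i) ^ 2"
proof -
  have Uc: "U \<in> carrier_mat n n" using U unfolding unitary_def by auto
  have ci: "col U i \<in> carrier_vec n" using Uc col_dim[of U i] by simp
  have "complex_of_real (lam i) = complex_of_real (lam i) * ip (col U i) (col U i)"
    using col_unit[OF U i] by (simp add: ip_self)
  also have "\<dots> = ip (col U i) ((adj B * B) *\<^sub>v col U i)"
  proof -
    have "adj B * B \<in> carrier_mat n n" using B by (metis adj_carrier mult_carrier_mat)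
    from eig_col[OF Uc this MU i] show ?thesis by (simp add: ip_smult_right)
  qed
  also have "\<dots> = ip (col U i) (adj B *\<^sub>v (B *\<^sub>v col U i))" using B ci by (metis adj_carrier assoc_mult_mat_vec)
  also have "\<dots> = ip (B *\<^sub>v col U i) (B *\<^sub>v col U i)"
    using B ci by (subst ip_mult_adj[of "adj B" n n]) auto
  also have "\<dots> = complex_of_real (vnorm (B *\<^sub>v col U i) ^ 2)" by (simp add: ip_self)
  finally show ?thesis by (simp only: of_real_eq_iff)
qed

lemma psd_herm: "psd n P \<Longrightarrow> adj P = P" by (simp add: psd_def)
lemma psd_carrier: "psd n P \<Longrightarrow> P \<in> carrier_mat n n" by (simp add: psd_def)
lemma psd_quad: assumes "psd n P" "v \<in> carrier_vec n"
  shows "ip v (P *\<^sub>v v) = complex_of_real (Re (ip v (P *\<^sub>v v))) \<and> Re (ip v (P *\<^sub>v v)) \<ge> 0"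
proof -
  have P: "P \<in> carrier_mat n n" using assms by (simp add: psd_def)
  have q: "quad P v = ip v (P *\<^sub>v v)" by (rule quad_ip[OF P assms(2)])
  from assms have "Im (quad P v) = 0 \<and> Re (quad P v) \<ge> 0" unfolding psd_def by blast
  thus ?thesis unfolding q by (auto simp: complex_eq_iff)
qed

lemma psd_sqrt_eig: assumes P: "psd n P" and x: "x \<in> carrier_vec n" and lam: "lam \<ge> 0"
  and Px: "P *\<^sub>v (P *\<^sub>v x) = complex_of_real lam \<cdot>\<^sub>v x"
  shows "P *\<^sub>v x = complex_of_real (sqrt lam) \<cdot>\<^sub>v x"
proof -
  have Pc: "P \<in> carrier_mat n n" and Ph: "adj P = P" using P by (auto simp: psd_def)
  define s where "s = sqrt lam"
  have s0: "s \<ge> 0" and ss: "s * s = lam" using lam unfolding s_def by auto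
  define y where "y = P *\<^sub>v x - complex_of_real s \<cdot>\<^sub>v x"
  have yc: "y \<in> carrier_vec n" unfolding y_def using Pc x by simp
  have Py: "P *\<^sub>v y = - complex_of_real s \<cdot>\<^sub>v y"
  proof -
    have "P *\<^sub>v y = P *\<^sub>v (P *\<^sub>v x) - complex_of_real s \<cdot>\<^sub>v (P *\<^sub>v x)"
      unfolding y_def using Pc x by (simp add: mult_minus_distrib_mat_vec mult_mat_vec)
    also have "\<dots> = - complex_of_real s \<cdot>\<^sub>v y"
      unfolding Px y_def using Pc x ss
      by (intro eq_vecI) (auto simp: algebra_simps of_real_mult[symmetric] simp del: of_real_mult)
    finally show ?thesis .
  qed
  have "y = 0\<^sub>v n"
  proof (cases "s = 0")
    case True
    hence Py0: "P *\<^sub>v y = 0\<^sub>v n" using Py yc by auto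
    have yP: "y = P *\<^sub>v x" unfolding y_def using True Pc x by auto
    have "complex_of_real (vnorm y ^ 2) = ip y y" by (simp add: ip_self)
    also have "\<dots> = ip (P *\<^sub>v x) y" using yP by simp
    also have "\<dots> = ip x (P *\<^sub>v y)" using Pc x yc Ph by (metis ip_mult_adj)
    also have "\<dots> = 0" unfolding Py0 by (simp add: ip_def)
    finally have "vnorm y = 0" by simp
    thus ?thesis using vnorm_zero_iff[of y] yc by simp
  next
    case False
    hence sp: "s > 0" using s0 by simp
    have "ip y (P *\<^sub>v y) = - complex_of_real s * complex_of_real (vnorm y ^ 2)"
      unfolding Py by (simp add: ip_smult_right ip_self)
    moreover have "Re (ip y (P *\<^sub>v y)) \<ge> 0" using psd_quad[OF P yc] by simp
    ultimately have "- s * vnorm y ^ 2 \<ge> 0" by simp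
    hence "vnorm y ^ 2 \<le> 0" using sp by (simp add: mult_le_0_iff)
    hence "vnorm y = 0" by simp
    thus ?thesis using vnorm_zero_iff[of y] yc by simp
  qed
  hence "P *\<^sub>v x - complex_of_real s \<cdot>\<^sub>v x = 0\<^sub>v n" unfolding y_def .
  hence "\<And>k. k < n \<Longrightarrow> (P *\<^sub>v x) $ k - (complex_of_real s \<cdot>\<^sub>v x) $ k = 0"
    using Pc x by (metis carrier_vecD index_minus_vec(1) index_zero_vec(1) smult_carrier_vec)
  thus ?thesis unfolding s_def[symmetric] using Pc x by (intro eq_vecI) auto
qed

lemma massoc: "A \<in> carrier_mat n n \<Longrightarrow> B \<in> carrier_mat n n \<Longrightarrow> C \<in> carrier_mat n n \<Longrightarrow> A * B * C = A * (B * C)"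
  by (rule assoc_mult_mat)
lemma mcarr: "A \<in> carrier_mat n n \<Longrightarrow> B \<in> carrier_mat n n \<Longrightarrow> A * B \<in> carrier_mat n n"
  by simp
lemma mvcarr: "A \<in> carrier_mat n n \<Longrightarrow> v \<in> carrier_vec n \<Longrightarrow> A *\<^sub>v v \<in> carrier_vec n"
  by simp
lemma mvassoc: "A \<in> carrier_mat n n \<Longrightarrow> B \<in> carrier_mat n n \<Longrightarrow> v \<in> carrier_vec n \<Longrightarrow> (A * B) *\<^sub>v v = A *\<^sub>v (B *\<^sub>v v)"
  by (rule assoc_mult_mat_vec)
lemma unitary_cancel: assumes "unitary n U" "X \<in> carrier_mat n n"
  shows "adj U * (U * X) = X" "U * (adj U * X) = X"
  using assms unfolding unitary_def by (auto simp: massoc[where n=n, symmetric])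

lemma mat_eq_by_unitary: assumes U: "unitary n U" and P: "P \<in> carrier_mat n n" and Q: "Q \<in> carrier_mat n n"
  and PQ: "\<And>i. i < n \<Longrightarrow> P *\<^sub>v col U i = Q *\<^sub>v col U i"
  shows "P = Q"
proof -
  have Uc: "U \<in> carrier_mat n n" and Ui: "U * adj U = 1\<^sub>m n" using U unfolding unitary_def by auto
  have PU: "P * U = Q * U"
  proof (rule eq_matI)
    fix k i assume "k < dim_row (Q * U)" "i < dim_col (Q * U)"
    hence k: "k < n" and i: "i < n" using Q Uc by auto
    have "(P * U) $$ (k,i) = (P *\<^sub>v col U i) $ k" using P Uc k i by simp
    also have "\<dots> = (Q *\<^sub>v col U i) $ k" using PQ[OF i] by simp
    also have "\<dots> = (Q * U) $$ (k,i)" using Q Uc k i by simp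
    finally show "(P * U) $$ (k,i) = (Q * U) $$ (k,i)" .
  qed (use P Q in auto)
  have "P = P * U * adj U" using P Uc Ui by (metis adj_carrier assoc_mult_mat right_mult_one_mat)
  also have "\<dots> = Q * U * adj U" by (simp add: PU)
  also have "\<dots> = Q" using Q Uc Ui by (metis adj_carrier assoc_mult_mat right_mult_one_mat)
  finally show ?thesis .
qed

lemma sqrt_unique: assumes P: "psd n P" and Q: "psd n Q" and PQ: "P * P = Q * Q"
  shows "P = Q"
proof -
  have Pc: "P \<in> carrier_mat n n" and Qc: "Q \<in> carrier_mat n n" and Qh: "adj Q = Q"
    using P Q by (auto simp: psd_def)
  define M where "M = Q * Q"
  have Mc: "M \<in> carrier_mat n n" unfolding M_def using Qc by simp
  have Mh: "adj M = M" unfolding M_def using Qc Qh by (simp add: adj_mult)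
  obtain U lam where U: "unitary n U" and MU: "M * U = U * dmat n lam"
    using spectral[OF Mc Mh] by blast
  have Uc: "U \<in> carrier_mat n n" using U unfolding unitary_def by auto
  have MU': "adj Q * Q * U = U * dmat n lam" using MU Qh unfolding M_def by simp
  show ?thesis
  proof (rule mat_eq_by_unitary[OF U Pc Qc])
    fix i assume i: "i < n"
    have ci: "col U i \<in> carrier_vec n" using Uc col_dim[of U i] by simp
    have lam: "lam i \<ge> 0" using eig_value_norm[OF U Qc MU' i] by simp
    have ev: "M *\<^sub>v col U i = complex_of_real (lam i) \<cdot>\<^sub>v col U i" by (rule eig_col[OF Uc Mc MU i])
    have "P *\<^sub>v (P *\<^sub>v col U i) = complex_of_real (lam i) \<cdot>\<^sub>v col U i"
      using ev ci Pc unfolding M_def PQ[symmetric] by (metis assoc_mult_mat_vec)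
    from psd_sqrt_eig[OF P ci lam this]
    have "P *\<^sub>v col U i = complex_of_real (sqrt (lam i)) \<cdot>\<^sub>v col U i" .
    moreover have "Q *\<^sub>v (Q *\<^sub>v col U i) = complex_of_real (lam i) \<cdot>\<^sub>v col U i"
      using ev ci Qc unfolding M_def by (metis assoc_mult_mat_vec)
    from psd_sqrt_eig[OF Q ci lam this]
    have "Q *\<^sub>v col U i = complex_of_real (sqrt (lam i)) \<cdot>\<^sub>v col U i" .
    ultimately show "P *\<^sub>v col U i = Q *\<^sub>v col U i" by simp
  qed
qed

lemma sqrt_exists: assumes U: "unitary n U" and lam: "\<And>i. i < n \<Longrightarrow> lam i \<ge> 0"
  and M: "M \<in> carrier_mat n n" and MU: "M * U = U * dmat n lam"
  defines "S \<equiv> U * dmat n (\<lambda>i. sqrt (lam i)) * adj U"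
  shows "psd n S" "S * S = M"
proof -
  have Uc: "U \<in> carrier_mat n n" and Ui: "adj U * U = 1\<^sub>m n" and Ui': "U * adj U = 1\<^sub>m n"
    using U unfolding unitary_def by auto
  define D where "D = dmat n (\<lambda>i. sqrt (lam i))"
  have Dc: "D \<in> carrier_mat n n" unfolding D_def by simp
  have Sc: "S \<in> carrier_mat n n" unfolding S_def using Uc by (metis adj_carrier mult_carrier_mat dmat_carrier)
  have DD: "D * D = dmat n lam"
    unfolding D_def dmat_mult
    by (rule eq_matI) (auto simp: lam real_sqrt_mult[symmetric])
  have "S * S = U * (D * (adj U * (U * (D * adj U))))" unfolding S_def D_def[symmetric]
    using Uc Dc by (simp add: massoc[where n=n] mcarr[where n=n])
  also have "\<dots> = U * ((D * D) * adj U)" using Uc Dc U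
    by (simp add: massoc[where n=n] mcarr[where n=n] unitary_cancel)
  also have "\<dots> = (M * U) * adj U" unfolding DD MU using Uc by (simp add: massoc[where n=n])
  also have "\<dots> = M" using M Uc Ui' by (simp add: massoc[where n=n])
  finally show "S * S = M" .
  have Sh: "adj S = S" unfolding S_def D_def[symmetric] using Uc Dc
    by (simp add: adj_mult massoc[where n=n] mcarr[where n=n] D_def)
  have "Im (quad S v) = 0 \<and> Re (quad S v) \<ge> 0" if v: "v \<in> carrier_vec n" for v
  proof -
    define w where "w = adj U *\<^sub>v v"
    have wc: "w \<in> carrier_vec n" unfolding w_def using Uc v by (simp add: mvcarr[where n=n])
    have "quad S v = ip v (S *\<^sub>v v)" by (rule quad_ip[OF Sc v])
    also have "\<dots> = ip v (U *\<^sub>v (D *\<^sub>v w))" unfolding S_def D_def[symmetric] w_def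
      using Uc Dc v by (simp add: mvassoc[where n=n] mcarr[where n=n] mvcarr[where n=n])
    also have "\<dots> = ip w (D *\<^sub>v w)" unfolding w_def using Uc Dc v
      by (subst ip_mult_adj[of U n n]) (auto simp: mvcarr[where n=n])
    also have "\<dots> = complex_of_real (\<Sum>i<n. sqrt (lam i) * (cmod (w $ i))^2)"
      unfolding D_def by (rule ip_dmat[OF wc])
    finally show ?thesis using lam by (auto intro!: sum_nonneg)
  qed
  thus "psd n S" unfolding psd_def using Sc Sh by blast
qed

lemma abs_mat_eq: assumes A: "A \<in> carrier_mat n n" and P: "psd n P" and PA: "P * P = adj A * A"
  shows "abs_mat A = P"
proof -
  have dc: "dim_col A = n" using A by simp
  show ?thesis unfolding abs_mat_def dc
  proof (rule the_equality)
    show "psd n P \<and> P * P = adj A * A" using P PA by simp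
  next
    fix Q assume "psd n Q \<and> Q * Q = adj A * A"
    thus "Q = P" using sqrt_unique[of n Q P] P PA by simp
  qed
qed

lemma tn_formula: assumes A: "A \<in> carrier_mat n n" and U: "unitary n U"
  and lam: "\<And>i. i < n \<Longrightarrow> lam i \<ge> 0" and MU: "adj A * A * U = U * dmat n lam"
  shows "abs_mat A = U * dmat n (\<lambda>i. sqrt (lam i)) * adj U"
    "trace_norm A = (\<Sum>i<n. sqrt (lam i))"
proof -
  have Mc: "adj A * A \<in> carrier_mat n n" using A by (metis adj_carrier mult_carrier_mat)
  note S = sqrt_exists[OF U lam Mc MU]
  show ab: "abs_mat A = U * dmat n (\<lambda>i. sqrt (lam i)) * adj U"
    by (rule abs_mat_eq[OF A S])
  have Uc: "U \<in> carrier_mat n n" and Ui: "adj U * U = 1\<^sub>m n" using U unfolding unitary_def by auto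
  have "mtrace (U * dmat n (\<lambda>i. sqrt (lam i)) * adj U) = mtrace (U * (dmat n (\<lambda>i. sqrt (lam i)) * adj U))"
    using Uc by (metis adj_carrier assoc_mult_mat dmat_carrier)
  also have "\<dots> = mtrace ((dmat n (\<lambda>i. sqrt (lam i)) * adj U) * U)"
    using Uc by (intro mtrace_cyclic) (auto intro: mult_carrier_mat)
  also have "\<dots> = mtrace (dmat n (\<lambda>i. sqrt (lam i)) * (adj U * U))"
    using Uc by (metis adj_carrier assoc_mult_mat dmat_carrier)
  also have "\<dots> = complex_of_real (\<Sum>i<n. sqrt (lam i))" using Ui by (simp add: mtrace_dmat)
  finally show "trace_norm A = (\<Sum>i<n. sqrt (lam i))" unfolding trace_norm_def ab by simp
qed

lemma tn_exists: assumes A: "A \<in> carrier_mat n n"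
  shows "\<exists>U lam. unitary n U \<and> (\<forall>i<n. lam i \<ge> 0) \<and> adj A * A * U = U * dmat n lam"
proof -
  have Mc: "adj A * A \<in> carrier_mat n n" using A by (metis adj_carrier mult_carrier_mat)
  have Mh: "adj (adj A * A) = adj A * A" using A by (simp add: adj_mult)
  obtain U lam where U: "unitary n U" and MU: "adj A * A * U = U * dmat n lam"
    using spectral[OF Mc Mh] by blast
  have "\<forall>i<n. lam i \<ge> 0" using eig_value_norm[OF U A MU] by simp
  thus ?thesis using U MU by blast
qed

lemma comp_le_vnorm: "k < dim_vec v \<Longrightarrow> cmod (v $ k) \<le> vnorm v"
  unfolding vnorm_L2 by (rule member_le_L2_set) auto

definition opC :: "complex mat \<Rightarrow> real" where
  "opC X = (\<Sum>i<dim_row X. \<Sum>k<dim_col X. cmod (X $$ (i,k)))"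

lemma op_bound: assumes v: "v \<in> carrier_vec (dim_col X)"
  shows "vnorm (X *\<^sub>v v) \<le> opC X * vnorm v"
proof -
  have "vnorm (X *\<^sub>v v) \<le> (\<Sum>i<dim_row X. \<bar>cmod ((X *\<^sub>v v) $ i)\<bar>)"
    unfolding vnorm_L2 dim_mult_mat_vec by (rule L2_set_le_sum_abs)
  also have "\<dots> \<le> (\<Sum>i<dim_row X. \<Sum>k<dim_col X. cmod (X $$ (i,k)) * vnorm v)"
  proof (rule sum_mono)
    fix i assume i: "i \<in> {..<dim_row X}"
    have "\<bar>cmod ((X *\<^sub>v v) $ i)\<bar> = cmod (\<Sum>k<dim_col X. X $$ (i,k) * v $ k)"
      using i v by (simp add: mult_vec_entry del: index_mult_mat_vec)
    also have "\<dots> \<le> (\<Sum>k<dim_col X. cmod (X $$ (i,k) * v $ k))" by (rule norm_sum)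
    also have "\<dots> \<le> (\<Sum>k<dim_col X. cmod (X $$ (i,k)) * vnorm v)"
      using v by (intro sum_mono) (auto simp: norm_mult intro!: mult_left_mono comp_le_vnorm)
    finally show "\<bar>cmod ((X *\<^sub>v v) $ i)\<bar> \<le> (\<Sum>k<dim_col X. cmod (X $$ (i,k)) * vnorm v)" .
  qed
  also have "\<dots> = opC X * vnorm v" unfolding opC_def by (simp add: sum_distrib_right)
  finally show ?thesis .
qed

lemma mvzero[simp]: "A *\<^sub>v 0\<^sub>v (dim_col A) = 0\<^sub>v (dim_row A)"
  by (rule eq_vecI) (auto simp: scalar_prod_def)

definition opset :: "complex mat \<Rightarrow> real set" where
  "opset A = {vnorm (A *\<^sub>v v) | v. v \<in> carrier_vec (dim_col A) \<and> vnorm v \<le> 1}"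

lemma op_norm_opset: "op_norm A = Sup (opset A)" unfolding op_norm_def opset_def ..

lemma opset_bdd: "bdd_above (opset A)"
proof -
  have "opC A \<ge> 0" unfolding opC_def by (auto intro!: sum_nonneg)
  hence "x \<le> opC A" if "x \<in> opset A" for x
    using that op_bound unfolding opset_def
    by (auto intro: order_trans[OF op_bound] mult_left_le)
  thus ?thesis by (intro bdd_aboveI[of _ "opC A"]) blast
qed

lemma opset_ne: "0 \<in> opset A"
proof -
  have "vnorm (A *\<^sub>v 0\<^sub>v (dim_col A)) = 0" by (simp add: vnorm_zero_iff)
  moreover have "vnorm (0\<^sub>v (dim_col A)) = 0" by (simp add: vnorm_zero_iff)
  ultimately show ?thesis unfolding opset_def
    by (intro CollectI exI[of _ "0\<^sub>v (dim_col A)"]) auto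
qed

lemma op_norm_nonneg: "op_norm A \<ge> 0"
  unfolding op_norm_opset using opset_ne opset_bdd by (rule cSup_upper)

lemma op_le_mult: assumes v: "v \<in> carrier_vec (dim_col A)"
  shows "vnorm (A *\<^sub>v v) \<le> op_norm A * vnorm v"
proof (cases "vnorm v = 0")
  case True
  hence "v = 0\<^sub>v (dim_col A)" using vnorm_zero_iff[of v] v by simp
  hence "vnorm (A *\<^sub>v v) = 0" by (simp add: vnorm_zero_iff)
  thus ?thesis using True by simp
next
  case False
  hence p: "vnorm v > 0" using vnorm_nonneg[of v] by simp
  define w where "w = complex_of_real (1 / vnorm v) \<cdot>\<^sub>v v"
  have wn: "vnorm w = 1" unfolding w_def vnorm_smult using p by (simp add: norm_divide)
  have wc: "w \<in> carrier_vec (dim_col A)" unfolding w_def using v by simp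
  have "vnorm (A *\<^sub>v w) \<in> opset A" unfolding opset_def using wn wc by auto
  hence le: "vnorm (A *\<^sub>v w) \<le> op_norm A" unfolding op_norm_opset using opset_bdd by (rule cSup_upper)
  have "A *\<^sub>v w = complex_of_real (1 / vnorm v) \<cdot>\<^sub>v (A *\<^sub>v v)"
    unfolding w_def using v by (metis carrier_matI mult_mat_vec)
  hence "vnorm (A *\<^sub>v w) = vnorm (A *\<^sub>v v) / vnorm v" using p by (simp add: vnorm_smult norm_divide)
  with le p show ?thesis by (simp add: divide_le_eq mult.commute)
qed

lemma op_norm_le: assumes c: "c \<ge> 0" and h: "\<And>v. v \<in> carrier_vec (dim_col A) \<Longrightarrow> vnorm (A *\<^sub>v v) \<le> c * vnorm v"
  shows "op_norm A \<le> c"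
  unfolding op_norm_opset
proof (rule cSup_least)
  show "opset A \<noteq> {}" using opset_ne by auto
  fix x assume "x \<in> opset A"
  then obtain v where v: "v \<in> carrier_vec (dim_col A)" "vnorm v \<le> 1" and x: "x = vnorm (A *\<^sub>v v)"
    unfolding opset_def by auto
  have "x \<le> c * vnorm v" using h[OF v(1)] x by simp
  also have "\<dots> \<le> c" using v(2) c by (simp add: mult_left_le)
  finally show "x \<le> c" .
qed

lemma op_norm_one: "op_norm (1\<^sub>m n) \<le> 1"
  by (rule op_norm_le) auto

lemma mtrace_sandwich: assumes U: "unitary n U" and B: "B \<in> carrier_mat n n"
  shows "mtrace B = (\<Sum>i<n. ip (col U i) (B *\<^sub>v col U i))"
proof -
  have Uc: "U \<in> carrier_mat n n" and Ui': "U * adj U = 1\<^sub>m n" using U unfolding unitary_def by auto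
  have "B = (B * U) * adj U" using B Uc Ui' by (simp add: massoc[where n=n])
  hence "mtrace B = mtrace ((B * U) * adj U)" by simp
  also have "\<dots> = mtrace (adj U * (B * U))" using B Uc by (intro mtrace_cyclic) auto
  also have "adj U * (B * U) = adj U * B * U" using B Uc by (simp add: massoc[where n=n])
  also have "mtrace (adj U * B * U) = (\<Sum>i<n. (adj U * B * U) $$ (i,i))"
    unfolding mtrace_def using Uc B by simp
  also have "\<dots> = (\<Sum>i<n. ip (col U i) (B *\<^sub>v col U i))"
    using sandwich_entry[OF Uc B Uc] by simp
  finally show ?thesis .
qed

lemma T1: assumes S: "S \<in> carrier_mat n n" and X: "X \<in> carrier_mat n n"
  shows "cmod (mtrace (S * X)) \<le> trace_norm S * op_norm X"
proof -
  obtain U lam where U: "unitary n U" and lam: "\<forall>i<n. lam i \<ge> 0" and MU: "adj S * S * U = U * dmat n lam"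
    using tn_exists[OF S] by blast
  have Uc: "U \<in> carrier_mat n n" using U unfolding unitary_def by auto
  have tn: "trace_norm S = (\<Sum>i<n. sqrt (lam i))" using tn_formula[OF S U _ MU] lam by simp
  have "mtrace (S * X) = mtrace (X * S)" using S X by (rule mtrace_cyclic)
  also have "\<dots> = (\<Sum>i<n. ip (col U i) ((X * S) *\<^sub>v col U i))"
    using mtrace_sandwich[OF U] S X by simp
  finally have tr: "mtrace (S * X) = (\<Sum>i<n. ip (col U i) ((X * S) *\<^sub>v col U i))" .
  have "cmod (ip (col U i) ((X * S) *\<^sub>v col U i)) \<le> op_norm X * sqrt (lam i)" if i: "i < n" for i
  proof -
    have ci: "col U i \<in> carrier_vec n" using Uc col_dim[of U i] by simp
    have "cmod (ip (col U i) ((X * S) *\<^sub>v col U i)) \<le> vnorm (col U i) * vnorm ((X * S) *\<^sub>v col U i)"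
      using ci X S Uc by (intro cauchy_schwarz) simp
    also have "(X * S) *\<^sub>v col U i = X *\<^sub>v (S *\<^sub>v col U i)" using X S ci by (simp add: mvassoc[where n=n])
    also have "vnorm (col U i) = 1" using col_unit[OF U i] .
    also have "vnorm (X *\<^sub>v (S *\<^sub>v col U i)) \<le> op_norm X * vnorm (S *\<^sub>v col U i)"
      using X S ci by (intro op_le_mult) (simp add: mvcarr[where n=n])
    also have "vnorm (S *\<^sub>v col U i) = sqrt (lam i)"
      using eig_value_norm[OF U S MU i] vnorm_nonneg by simp
    finally show ?thesis using X S ci by (simp add: mvassoc[where n=n])
  qed
  hence "cmod (mtrace (S * X)) \<le> (\<Sum>i<n. op_norm X * sqrt (lam i))"
    unfolding tr by (intro order_trans[OF norm_sum] sum_mono) auto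
  also have "\<dots> = trace_norm S * op_norm X" unfolding tn by (simp add: sum_distrib_left mult.commute)
  finally show ?thesis .
qed

definition outer :: "nat \<Rightarrow> complex vec \<Rightarrow> complex vec \<Rightarrow> complex mat" where
  "outer n w z = mat n n (\<lambda>(i,j). w $ i * cnj (z $ j))"

lemma outer_carrier[simp]: "outer n w z \<in> carrier_mat n n" by (simp add: outer_def)
lemma outer_index[simp]: "i < n \<Longrightarrow> j < n \<Longrightarrow> outer n w z $$ (i,j) = w $ i * cnj (z $ j)"
  by (simp add: outer_def)
lemma outer_dim[simp]: "dim_row (outer n w z) = n" "dim_col (outer n w z) = n" by (simp_all add: outer_def)

lemma ip_sum_self: "v \<in> carrier_vec n \<Longrightarrow> (\<Sum>k<n. cnj (v $ k) * v $ k) = complex_of_real (vnorm v ^ 2)"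
  using ip_self[of v] unfolding ip_def by simp

lemma trace_outer_mult: assumes w: "w \<in> carrier_vec n" and z: "z \<in> carrier_vec n" and Y: "Y \<in> carrier_mat n n"
  shows "mtrace (outer n w z * Y) = ip z (Y *\<^sub>v w)"
proof -
  have "mtrace (outer n w z * Y) = (\<Sum>i<n. \<Sum>k<n. w $ i * cnj (z $ k) * Y $$ (k,i))"
    unfolding mtrace_def using Y by (simp add: mult_entry del: index_mult_mat(1))
  also have "\<dots> = (\<Sum>k<n. \<Sum>i<n. cnj (z $ k) * (Y $$ (k,i) * w $ i))"
    by (subst sum.swap) (simp add: mult_ac)
  also have "\<dots> = ip z (Y *\<^sub>v w)"
    unfolding ip_def using Y w by (simp add: mult_vec_entry sum_distrib_left del: index_mult_mat_vec)
  finally show ?thesis .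
qed

lemma psd_zero: "psd n (0\<^sub>m n n)"
  unfolding psd_def by (auto simp: quad_def scalar_prod_def)

lemma tn_zero: "trace_norm (0\<^sub>m n n) = 0"
proof -
  have "abs_mat (0\<^sub>m n n) = 0\<^sub>m n n" by (rule abs_mat_eq[OF _ psd_zero]) auto
  thus ?thesis unfolding trace_norm_def by (simp add: mtrace_zero)
qed

lemma outer_tn: assumes w: "w \<in> carrier_vec n" and z: "z \<in> carrier_vec n"
  shows "trace_norm (outer n w z) = vnorm w * vnorm z"
proof (cases "vnorm z = 0")
  case True
  hence z0: "z = 0\<^sub>v n" using vnorm_zero_iff[of z] z by simp
  have "outer n w z = 0\<^sub>m n n" unfolding z0 by (rule eq_matI) auto
  thus ?thesis using True tn_zero by simp
next
  case False
  hence zp: "vnorm z > 0" using vnorm_nonneg[of z] by simp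
  define a where "a = vnorm w / vnorm z"
  have a0: "a \<ge> 0" unfolding a_def using zp vnorm_nonneg[of w] by simp
  define P where "P = complex_of_real a \<cdot>\<^sub>m outer n z z"
  have Pc: "P \<in> carrier_mat n n" unfolding P_def by simp
  have Ph: "adj P = P" unfolding P_def by (rule eq_matI) auto
  have zz: "(\<Sum>k<n. z $ k * cnj (z $ k)) = complex_of_real (vnorm z ^ 2)"
    using ip_sum_self[OF z] by (simp add: mult.commute)
  have ww: "(\<Sum>k<n. cnj (w $ k) * w $ k) = complex_of_real (vnorm w ^ 2)"
    using ip_sum_self[OF w] by simp
  have "Im (quad P v) = 0 \<and> Re (quad P v) \<ge> 0" if v: "v \<in> carrier_vec n" for v
  proof -
    have Pv: "(P *\<^sub>v v) $ i = complex_of_real a * z $ i * ip z v" if i: "i < n" for i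
      unfolding P_def using i v
      by (simp add: mult_vec_entry ip_def sum_distrib_left mult_ac del: index_mult_mat_vec)
    have "quad P v = ip v (P *\<^sub>v v)" by (rule quad_ip[OF Pc v])
    also have "\<dots> = (\<Sum>i<n. cnj (v $ i) * (complex_of_real a * z $ i * ip z v))"
      unfolding ip_def[of v "P *\<^sub>v v"] using Pv Pc by (auto intro!: sum.cong)
    also have "\<dots> = complex_of_real a * ip z v * (\<Sum>i<n. cnj (v $ i) * z $ i)"
      by (simp add: sum_distrib_left mult_ac)
    also have "(\<Sum>i<n. cnj (v $ i) * z $ i) = cnj (ip z v)"
      unfolding ip_def using v by (simp add: mult.commute)
    also have "complex_of_real a * ip z v * cnj (ip z v) = complex_of_real (a * (cmod (ip z v))^2)"
      using cnj_mult_self[of "ip z v"] by (simp add: mult_ac)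
    finally show ?thesis using a0 by simp
  qed
  hence Pp: "psd n P" unfolding psd_def using Pc Ph by blast
  have PP: "P * P = adj (outer n w z) * outer n w z"
  proof (rule eq_matI)
    fix i j assume "i < dim_row (adj (outer n w z) * outer n w z)" "j < dim_col (adj (outer n w z) * outer n w z)"
    hence i: "i < n" and j: "j < n" by auto
    have "(P * P) $$ (i,j) = (\<Sum>k<n. complex_of_real a * (z $ i * cnj (z $ k)) * (complex_of_real a * (z $ k * cnj (z $ j))))"
      unfolding P_def using i j by (simp add: mult_entry del: index_mult_mat(1))
    also have "\<dots> = complex_of_real (a^2) * z $ i * cnj (z $ j) * (\<Sum>k<n. z $ k * cnj (z $ k))"
      by (simp add: sum_distrib_left power2_eq_square mult_ac)
    also have "\<dots> = complex_of_real (a^2 * vnorm z ^ 2) * z $ i * cnj (z $ j)" unfolding zz by simp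
    also have "a^2 * vnorm z ^ 2 = vnorm w ^ 2" unfolding a_def using zp by (simp add: power_divide)
    also have "complex_of_real (vnorm w ^ 2) * z $ i * cnj (z $ j)
       = (\<Sum>k<n. cnj (w $ k * cnj (z $ i)) * (w $ k * cnj (z $ j)))"
      unfolding ww[symmetric] by (simp add: sum_distrib_left sum_distrib_right mult_ac)
    also have "\<dots> = (adj (outer n w z) * outer n w z) $$ (i,j)"
      using i j by (simp add: mult_entry del: index_mult_mat(1))
    finally show "(P * P) $$ (i,j) = (adj (outer n w z) * outer n w z) $$ (i,j)" .
  qed (auto simp: P_def)
  have ab: "abs_mat (outer n w z) = P" by (rule abs_mat_eq[OF _ Pp PP]) simp
  have "mtrace P = complex_of_real a * (\<Sum>k<n. z $ k * cnj (z $ k))"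
    unfolding P_def mtrace_def by (simp add: sum_distrib_left)
  also have "\<dots> = complex_of_real (vnorm w * vnorm z)" unfolding zz a_def using zp
    by (simp add: power2_eq_square)
  finally show ?thesis unfolding trace_norm_def ab by simp
qed

lemma dual_op_bound: assumes Y: "Y \<in> carrier_mat n n" and c: "c \<ge> 0"
  and h: "\<And>S. S \<in> carrier_mat n n \<Longrightarrow> cmod (mtrace (S * Y)) \<le> c * trace_norm S"
  shows "op_norm Y \<le> c"
proof (rule op_norm_le[OF c])
  fix w :: "complex vec" assume "w \<in> carrier_vec (dim_col Y)"
  hence w: "w \<in> carrier_vec n" using Y by simp
  define z where "z = Y *\<^sub>v w"
  have zc: "z \<in> carrier_vec n" unfolding z_def using Y w by simp
  have "mtrace (outer n w z * Y) = complex_of_real (vnorm z ^ 2)"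
    using trace_outer_mult[OF w zc Y] by (simp add: z_def ip_self)
  hence "vnorm z ^ 2 \<le> c * (vnorm w * vnorm z)"
    using h[of "outer n w z"] outer_tn[OF w zc] by (simp add: norm_power)
  hence "vnorm z * vnorm z \<le> (c * vnorm w) * vnorm z" by (simp add: power2_eq_square mult_ac)
  hence "vnorm z \<le> c * vnorm w"
  proof (cases "vnorm z = 0")
    case True thus ?thesis using c vnorm_nonneg[of w] by simp
  next
    case False
    hence "vnorm z > 0" using vnorm_nonneg[of z] by simp
    thus ?thesis using \<open>vnorm z * vnorm z \<le> (c * vnorm w) * vnorm z\<close> by (rule mult_right_le_imp_le[rotated])
  qed
  thus "vnorm (Y *\<^sub>v w) \<le> c * vnorm w" unfolding z_def .
qed

lemma tn_nonneg: assumes A: "A \<in> carrier_mat n n" shows "trace_norm A \<ge> 0"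
proof -
  obtain U lam where U: "unitary n U" and lam: "\<forall>i<n. lam i \<ge> 0" and MU: "adj A * A * U = U * dmat n lam"
    using tn_exists[OF A] by blast
  have "trace_norm A = (\<Sum>i<n. sqrt (lam i))" using tn_formula[OF A U _ MU] lam by simp
  thus ?thesis using lam by (auto intro!: sum_nonneg)
qed

lemma partial_iso: assumes Q: "Q \<in> carrier_mat n n" and PP: "(Q * adj Q) * (Q * adj Q) = Q * adj Q"
  and w: "w \<in> carrier_vec n"
  shows "vnorm (adj Q *\<^sub>v w) \<le> vnorm w"
proof -
  define P where "P = Q * adj Q"
  have Pc: "P \<in> carrier_mat n n" unfolding P_def using Q by (simp add: mcarr[where n=n])
  have Ph: "adj P = P" unfolding P_def using Q by (simp add: adj_mult)
  have PP': "P * P = P" using PP unfolding P_def .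
  have aw: "adj Q *\<^sub>v w \<in> carrier_vec n" using Q w by (simp add: mvcarr[where n=n])
  have Pw: "P *\<^sub>v w \<in> carrier_vec n" using Pc w by simp
  have "complex_of_real (vnorm (adj Q *\<^sub>v w) ^ 2) = ip (adj Q *\<^sub>v w) (adj Q *\<^sub>v w)" by (simp add: ip_self)
  also have "\<dots> = ip (adj (adj Q) *\<^sub>v (adj Q *\<^sub>v w)) w"
    using Q w aw by (intro ip_mult_adj[of "adj Q" n n]) auto
  also have "adj (adj Q) *\<^sub>v (adj Q *\<^sub>v w) = P *\<^sub>v w" unfolding P_def using Q w
    by (simp add: mvassoc[where n=n])
  finally have a: "complex_of_real (vnorm (adj Q *\<^sub>v w) ^ 2) = ip (P *\<^sub>v w) w" .
  have "complex_of_real (vnorm (P *\<^sub>v w) ^ 2) = ip (P *\<^sub>v w) (P *\<^sub>v w)" by (simp add: ip_self)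
  also have "\<dots> = ip (adj P *\<^sub>v (P *\<^sub>v w)) w" using Pc w Pw by (intro ip_mult_adj[of P n n]) auto
  also have "adj P *\<^sub>v (P *\<^sub>v w) = P *\<^sub>v w" unfolding Ph using Pc w PP'
    by (simp add: mvassoc[where n=n, symmetric])
  finally have b: "complex_of_real (vnorm (P *\<^sub>v w) ^ 2) = ip (P *\<^sub>v w) w" .
  have ab: "vnorm (adj Q *\<^sub>v w) ^ 2 = vnorm (P *\<^sub>v w) ^ 2"
    by (subst of_real_eq_iff[symmetric, where 'a=complex]) (rule trans[OF a b[symmetric]])
  have "vnorm (P *\<^sub>v w) ^ 2 = cmod (ip (P *\<^sub>v w) w)" unfolding b[symmetric]
    by (simp only: norm_of_real abs_power2)
  also have "\<dots> \<le> vnorm (P *\<^sub>v w) * vnorm w" using Pc Pw w by (intro cauchy_schwarz) simp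
  finally have "vnorm (P *\<^sub>v w) * vnorm (P *\<^sub>v w) \<le> vnorm w * vnorm (P *\<^sub>v w)"
    by (simp add: power2_eq_square mult.commute)
  hence pw: "vnorm (P *\<^sub>v w) \<le> vnorm w"
  proof (cases "vnorm (P *\<^sub>v w) = 0")
    case True thus ?thesis using vnorm_nonneg[of w] by simp
  next
    case False
    hence "vnorm (P *\<^sub>v w) > 0" using vnorm_nonneg[of "P *\<^sub>v w"] by simp
    thus ?thesis using \<open>vnorm (P *\<^sub>v w) * vnorm (P *\<^sub>v w) \<le> vnorm w * vnorm (P *\<^sub>v w)\<close>
      by (rule mult_right_le_imp_le[rotated])
  qed
  have "vnorm (adj Q *\<^sub>v w) ^ 2 \<le> vnorm w ^ 2" unfolding ab
    using pw vnorm_nonneg by (intro power_mono) auto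
  thus ?thesis using vnorm_nonneg by (rule power2_le_imp_le)
qed

lemma smult_mult_left: assumes "(M :: complex mat) \<in> carrier_mat n n" "U \<in> carrier_mat n n"
  shows "(k \<cdot>\<^sub>m M) * U = k \<cdot>\<^sub>m (M * U)"
  by (rule eq_matI) (use assms in \<open>auto simp: mult_entry sum_distrib_left mult_ac simp del: index_mult_mat(1)\<close>)
lemma smult_mult_right: assumes "(M :: complex mat) \<in> carrier_mat n n" "U \<in> carrier_mat n n"
  shows "U * (k \<cdot>\<^sub>m M) = k \<cdot>\<^sub>m (U * M)"
proof (rule eq_matI)
  fix i j assume ij: "i < dim_row (k \<cdot>\<^sub>m (U * M))" "j < dim_col (k \<cdot>\<^sub>m (U * M))"
  have "(U * (k \<cdot>\<^sub>m M)) $$ (i,j) = (\<Sum>l<n. U $$ (i,l) * (k * M $$ (l,j)))"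
    using assms ij by (simp add: mult_entry del: index_mult_mat(1))
  also have "\<dots> = k * (\<Sum>l<n. U $$ (i,l) * M $$ (l,j))"
    by (auto simp: sum_distrib_left ac_simps intro!: sum.cong)
  also have "\<dots> = (k \<cdot>\<^sub>m (U * M)) $$ (i,j)"
    using assms ij by (simp add: mult_entry del: index_mult_mat(1))
  finally show "(U * (k \<cdot>\<^sub>m M)) $$ (i,j) = (k \<cdot>\<^sub>m (U * M)) $$ (i,j)" .
qed (use assms in auto)

lemma tn_dual_witness: assumes A: "A \<in> carrier_mat n n"
  shows "\<exists>Y. Y \<in> carrier_mat n n \<and> op_norm Y \<le> 1 \<and> mtrace (A * Y) = complex_of_real (trace_norm A)"
proof -
  obtain U lam where U: "unitary n U" and lam: "\<forall>i<n. lam i \<ge> 0" and MU: "adj A * A * U = U * dmat n lam"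
    using tn_exists[OF A] by blast
  have Uc: "U \<in> carrier_mat n n" and Ui: "adj U * U = 1\<^sub>m n" and Ui': "U * adj U = 1\<^sub>m n"
    using U unfolding unitary_def by auto
  have tn: "trace_norm A = (\<Sum>i<n. sqrt (lam i))" using tn_formula[OF A U _ MU] lam by simp
  define sp where "sp = (\<lambda>i. if lam i = 0 then 0 else 1 / sqrt (lam i))"
  have spl: "sp i * lam i = sqrt (lam i)" and spe: "sp i * (sp i * lam i * sp i) = sp i"
    if "lam i \<ge> 0" for i
  proof -
    show "sp i * lam i = sqrt (lam i)"
    proof (cases "lam i = 0")
      case True thus ?thesis unfolding sp_def by simp
    next
      case False
      define s where "s = sqrt (lam i)"
      have sp0: "s > 0" unfolding s_def using False that by simp
      have ls: "lam i = s * s" unfolding s_def using that by simp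
      show ?thesis unfolding sp_def s_def[symmetric] using False sp0 unfolding ls by simp
    qed
    show "sp i * (sp i * lam i * sp i) = sp i"
    proof (cases "lam i = 0")
      case True thus ?thesis unfolding sp_def by simp
    next
      case False
      define s where "s = sqrt (lam i)"
      have sp0: "s > 0" unfolding s_def using False that by simp
      have ls: "lam i = s * s" unfolding s_def using that by simp
      show ?thesis unfolding sp_def s_def[symmetric] using False sp0 unfolding ls by simp
    qed
  qed
  define Sp where "Sp = dmat n sp"
  have Spc: "Sp \<in> carrier_mat n n" unfolding Sp_def by simp
  define Q where "Q = A * (U * Sp)"
  have Qc: "Q \<in> carrier_mat n n" unfolding Q_def using A Uc Spc by (simp add: mcarr[where n=n])
  define Y where "Y = U * adj Q"
  have Yc: "Y \<in> carrier_mat n n" unfolding Y_def using Uc Qc by (simp add: mcarr[where n=n])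
  have aQ: "adj Q = Sp * (adj U * adj A)" unfolding Q_def Sp_def using A Uc
    by (simp add: adj_mult massoc[where n=n] mcarr[where n=n])
  have key: "adj U * (adj A * (A * U)) = dmat n lam"
  proof -
    have "adj A * (A * U) = U * dmat n lam" using MU A Uc by (simp add: massoc[where n=n])
    thus ?thesis using U by (simp add: unitary_cancel)
  qed
  have "mtrace (A * Y) = mtrace ((A * U) * (Sp * (adj U * adj A)))"
    unfolding Y_def aQ using A Uc Spc by (simp add: massoc[where n=n] mcarr[where n=n])
  also have "\<dots> = mtrace ((Sp * (adj U * adj A)) * (A * U))"
    using A Uc Spc by (intro mtrace_cyclic) (auto simp: mcarr[where n=n])
  also have "(Sp * (adj U * adj A)) * (A * U) = Sp * (adj U * (adj A * (A * U)))"
    using A Uc Spc by (simp add: massoc[where n=n] mcarr[where n=n])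
  also have "\<dots> = dmat n (\<lambda>i. sp i * lam i)" unfolding key Sp_def dmat_mult ..
  also have "mtrace \<dots> = complex_of_real (\<Sum>i<n. sqrt (lam i))"
    unfolding mtrace_dmat
  proof -
    have "sp i * lam i = sqrt (lam i)" if "i < n" for i
      using spl lam that by simp
    thus "complex_of_real (\<Sum>i<n. sp i * lam i) = complex_of_real (\<Sum>i<n. sqrt (lam i))" by simp
  qed
  finally have tr: "mtrace (A * Y) = complex_of_real (trace_norm A)" unfolding tn .
  define e where "e = (\<lambda>i. sp i * lam i * sp i)"
  have QQ: "adj Q * Q = dmat n e"
  proof -
    have "adj Q * Q = (Sp * (adj U * adj A)) * (A * (U * Sp))"
      unfolding aQ by (simp add: Q_def)
    also have "\<dots> = Sp * (adj U * (adj A * (A * U))) * Sp"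
      using A Uc Spc by (simp add: massoc[where n=n] mcarr[where n=n])
    also have "\<dots> = dmat n e" unfolding key Sp_def dmat_mult e_def ..
    finally show ?thesis .
  qed
  have Qe: "Q * dmat n e = Q"
  proof -
    have "dmat n (\<lambda>i. sp i * e i) = dmat n sp"
      by (rule eq_matI) (auto simp: e_def lam spe simp del: mult_eq_0_iff)
    hence "Sp * dmat n e = Sp" unfolding Sp_def dmat_mult by simp
    thus ?thesis unfolding Q_def using A Uc Spc by (simp add: massoc[where n=n] mcarr[where n=n])
  qed
  have PP: "(Q * adj Q) * (Q * adj Q) = Q * adj Q"
  proof -
    have "(Q * adj Q) * (Q * adj Q) = (Q * (adj Q * Q)) * adj Q"
      using Qc by (simp add: massoc[where n=n] mcarr[where n=n])
    also have "\<dots> = Q * adj Q" unfolding QQ Qe ..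
    finally show ?thesis .
  qed
  have "op_norm Y \<le> 1"
  proof (rule op_norm_le)
    fix w :: "complex vec" assume "w \<in> carrier_vec (dim_col Y)"
    hence w: "w \<in> carrier_vec n" using Yc by simp
    have "vnorm (Y *\<^sub>v w) = vnorm (U *\<^sub>v (adj Q *\<^sub>v w))" unfolding Y_def using Uc Qc w
      by (simp add: mvassoc[where n=n])
    also have "\<dots> = vnorm (adj Q *\<^sub>v w)" using Qc w by (intro vnorm_unitary[OF U]) (simp add: mvcarr[where n=n])
    also have "\<dots> \<le> vnorm w" by (rule partial_iso[OF Qc PP w])
    finally show "vnorm (Y *\<^sub>v w) \<le> 1 * vnorm w" by simp
  qed simp
  thus ?thesis using Yc tr by blast
qed

lemma tn_triangle: assumes A: "A \<in> carrier_mat n n" and B: "B \<in> carrier_mat n n"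
  shows "trace_norm (A + B) \<le> trace_norm A + trace_norm B"
proof -
  have C: "A + B \<in> carrier_mat n n" using A B by simp
  obtain Y where Y: "Y \<in> carrier_mat n n" "op_norm Y \<le> 1" and tr: "mtrace ((A + B) * Y) = complex_of_real (trace_norm (A + B))"
    using tn_dual_witness[OF C] by blast
  have "(A + B) * Y = A * Y + B * Y" using A B Y by (simp add: add_mult_distrib_mat)
  hence "mtrace ((A + B) * Y) = mtrace (A * Y) + mtrace (B * Y)" using A B Y by (simp add: mtrace_add[where n=n])
  hence "trace_norm (A + B) = cmod (mtrace (A * Y) + mtrace (B * Y))" using tr by (metis norm_of_real tn_nonneg[OF C] abs_of_nonneg)
  also have "\<dots> \<le> cmod (mtrace (A * Y)) + cmod (mtrace (B * Y))" by (rule norm_triangle_ineq)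
  also have "\<dots> \<le> trace_norm A * op_norm Y + trace_norm B * op_norm Y"
    using T1[OF A Y(1)] T1[OF B Y(1)] by simp
  also have "\<dots> \<le> trace_norm A + trace_norm B"
    using Y(2) tn_nonneg[OF A] tn_nonneg[OF B]
    by (intro add_mono) (auto intro: mult_left_le)
  finally show ?thesis .
qed

lemma tn_smult: assumes A: "A \<in> carrier_mat n n"
  shows "trace_norm (c \<cdot>\<^sub>m A) = cmod c * trace_norm A"
proof -
  obtain U lam where U: "unitary n U" and lam: "\<forall>i<n. lam i \<ge> 0" and MU: "adj A * A * U = U * dmat n lam"
    using tn_exists[OF A] by blast
  have Uc: "U \<in> carrier_mat n n" using U unfolding unitary_def by auto
  have tn: "trace_norm A = (\<Sum>i<n. sqrt (lam i))" using tn_formula[OF A U _ MU] lam by simp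
  have cA: "c \<cdot>\<^sub>m A \<in> carrier_mat n n" using A by simp
  have M: "adj (c \<cdot>\<^sub>m A) * (c \<cdot>\<^sub>m A) = complex_of_real ((cmod c)^2) \<cdot>\<^sub>m (adj A * A)"
  proof (rule eq_matI)
    fix i j assume "i < dim_row (complex_of_real ((cmod c)^2) \<cdot>\<^sub>m (adj A * A))"
      "j < dim_col (complex_of_real ((cmod c)^2) \<cdot>\<^sub>m (adj A * A))"
    hence i: "i < n" and j: "j < n" using A by auto
    have "(adj (c \<cdot>\<^sub>m A) * (c \<cdot>\<^sub>m A)) $$ (i,j) = (\<Sum>k<n. (cnj c * c) * (cnj (A $$ (k,i)) * A $$ (k,j)))"
      using A i j by (simp add: mult_entry ac_simps del: index_mult_mat(1))
    also have "\<dots> = (cnj c * c) * (adj A * A) $$ (i,j)"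
      using A i j by (simp add: mult_entry sum_distrib_left del: index_mult_mat(1))
    also have "cnj c * c = complex_of_real ((cmod c)^2)" by (rule cnj_mult_self)
    finally show "(adj (c \<cdot>\<^sub>m A) * (c \<cdot>\<^sub>m A)) $$ (i,j) = (complex_of_real ((cmod c)^2) \<cdot>\<^sub>m (adj A * A)) $$ (i,j)"
      using A i j by simp
  qed (use A in auto)
  have dm: "complex_of_real r \<cdot>\<^sub>m dmat n lam = dmat n (\<lambda>i. r * lam i)" for r
    by (rule eq_matI) auto
  have "adj (c \<cdot>\<^sub>m A) * (c \<cdot>\<^sub>m A) * U = complex_of_real ((cmod c)^2) \<cdot>\<^sub>m (adj A * A * U)"
    unfolding M using A Uc by (intro smult_mult_left) (auto simp: mcarr[where n=n])
  also have "\<dots> = U * dmat n (\<lambda>i. (cmod c)^2 * lam i)"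
    unfolding MU dm[symmetric] using Uc by (rule smult_mult_right[symmetric, OF dmat_carrier])
  finally have MU': "adj (c \<cdot>\<^sub>m A) * (c \<cdot>\<^sub>m A) * U = U * dmat n (\<lambda>i. (cmod c)^2 * lam i)" .
  have "trace_norm (c \<cdot>\<^sub>m A) = (\<Sum>i<n. sqrt ((cmod c)^2 * lam i))"
    using tn_formula[OF cA U _ MU'] lam by simp
  also have "\<dots> = (\<Sum>i<n. cmod c * sqrt (lam i))" by (simp add: real_sqrt_mult)
  also have "\<dots> = cmod c * trace_norm A" unfolding tn by (simp add: sum_distrib_left)
  finally show ?thesis .
qed

lemma tr_bound: assumes A: "A \<in> carrier_mat n n" shows "cmod (mtrace A) \<le> trace_norm A"
proof -
  have "cmod (mtrace (A * 1\<^sub>m n)) \<le> trace_norm A * op_norm (1\<^sub>m n)" by (rule T1[OF A]) simp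
  also have "\<dots> \<le> trace_norm A" using op_norm_one[of n] tn_nonneg[OF A] by (simp add: mult_left_le)
  finally show ?thesis using A by simp
qed

lemma op_outer: assumes w: "w \<in> carrier_vec n" and z: "z \<in> carrier_vec n"
  shows "op_norm (outer n w z) \<le> vnorm w * vnorm z"
proof (rule op_norm_le)
  show "0 \<le> vnorm w * vnorm z" by (simp add: vnorm_nonneg)
  fix v :: "complex vec" assume "v \<in> carrier_vec (dim_col (outer n w z))"
  hence v: "v \<in> carrier_vec n" by simp
  have "outer n w z *\<^sub>v v = ip z v \<cdot>\<^sub>v w"
    by (rule eq_vecI) (use v w in \<open>auto simp: mult_vec_entry ip_def sum_distrib_left mult_ac simp del: index_mult_mat_vec\<close>)
  hence "vnorm (outer n w z *\<^sub>v v) = cmod (ip z v) * vnorm w" by (simp add: vnorm_smult)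
  also have "\<dots> \<le> (vnorm z * vnorm v) * vnorm w"
    using z v by (intro mult_right_mono cauchy_schwarz) (auto simp: vnorm_nonneg)
  finally show "vnorm (outer n w z *\<^sub>v v) \<le> vnorm w * vnorm z * vnorm v" by (simp add: mult_ac)
qed

lemma vnorm_unit: "i < n \<Longrightarrow> vnorm (unit_vec n i) = 1"
proof -
  assume i: "i < n"
  have "(\<Sum>k<n. (cmod (unit_vec n i $ k))^2) = (\<Sum>k\<in>{i}. (cmod (unit_vec n i $ k))^2)"
    by (rule sum.mono_neutral_right) (use i in auto)
  thus ?thesis unfolding vnorm_def using i by simp
qed

lemma entry_bound: assumes A: "A \<in> carrier_mat n n" and i: "i < n" and j: "j < n"
  shows "cmod (A $$ (i,j)) \<le> trace_norm A"
proof -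
  have "mtrace (A * outer n (unit_vec n j) (unit_vec n i)) = mtrace (outer n (unit_vec n j) (unit_vec n i) * A)"
    using A by (intro mtrace_cyclic) auto
  also have "\<dots> = ip (unit_vec n i) (A *\<^sub>v unit_vec n j)" by (rule trace_outer_mult) (use A in auto)
  also have "\<dots> = A $$ (i,j)"
  proof -
    have "ip (unit_vec n i) (A *\<^sub>v unit_vec n j) = (\<Sum>k\<in>{i}. cnj (unit_vec n i $ k) * (A *\<^sub>v unit_vec n j) $ k)"
      unfolding ip_def using A i by (intro sum.mono_neutral_right) auto
    also have "\<dots> = (A *\<^sub>v unit_vec n j) $ i" using i by simp
    also have "\<dots> = A $$ (i,j)" using A i j by simp
    finally show ?thesis .
  qed
  finally have "A $$ (i,j) = mtrace (A * outer n (unit_vec n j) (unit_vec n i))" by simp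
  hence "cmod (A $$ (i,j)) \<le> trace_norm A * op_norm (outer n (unit_vec n j) (unit_vec n i))"
    using T1[OF A outer_carrier] by simp
  also have "\<dots> \<le> trace_norm A"
    using op_outer[of "unit_vec n j" n "unit_vec n i"] vnorm_unit[OF i] vnorm_unit[OF j] tn_nonneg[OF A]
    by (simp add: mult_left_le)
  finally show ?thesis .
qed

lemma tn_pos: assumes A: "A \<in> carrier_mat n n" and A0: "A \<noteq> 0\<^sub>m n n"
  shows "trace_norm A > 0"
proof -
  obtain i j where ij: "i < n" "j < n" "A $$ (i,j) \<noteq> 0"
    using A A0 by (metis carrier_matD eq_matI index_zero_mat(1,2,3))
  have "0 < cmod (A $$ (i,j))" using ij by simp
  also have "\<dots> \<le> trace_norm A" by (rule entry_bound[OF A ij(1,2)])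
  finally show ?thesis .
qed

lemma tn_density: assumes "density n \<rho>" shows "trace_norm \<rho> = 1"
proof -
  have P: "psd n \<rho>" and tr: "mtrace \<rho> = 1" using assms unfolding density_def by auto
  have c: "\<rho> \<in> carrier_mat n n" and h: "adj \<rho> = \<rho>" using P by (auto simp: psd_def)
  have "abs_mat \<rho> = \<rho>" by (rule abs_mat_eq[OF c P]) (simp add: h)
  thus ?thesis unfolding trace_norm_def using tr by simp
qed

definition E :: "nat \<Rightarrow> nat \<Rightarrow> nat \<Rightarrow> complex mat" where
  "E n i j = outer n (unit_vec n i) (unit_vec n j)"

lemma E_carrier[simp]: "E n i j \<in> carrier_mat n n" by (simp add: E_def)
lemma E_dim[simp]: "dim_row (E n i j) = n" "dim_col (E n i j) = n" by (simp_all add: E_def)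
lemma E_index: "a < n \<Longrightarrow> b < n \<Longrightarrow> i < n \<Longrightarrow> j < n \<Longrightarrow> E n i j $$ (a,b) = (if a = i \<and> b = j then 1 else 0)"
  by (simp add: E_def)

lemma mtrace_E: assumes G: "G \<in> carrier_mat n n" and i: "i < n" and j: "j < n"
  shows "mtrace (G * E n j i) = G $$ (i,j)"
proof -
  have "mtrace (G * E n j i) = mtrace (E n j i * G)" using G by (intro mtrace_cyclic) auto
  also have "\<dots> = ip (unit_vec n i) (G *\<^sub>v unit_vec n j)" unfolding E_def by (rule trace_outer_mult) (use G in auto)
  also have "\<dots> = (\<Sum>k\<in>{i}. cnj (unit_vec n i $ k) * (G *\<^sub>v unit_vec n j) $ k)"
    unfolding ip_def using G i by (intro sum.mono_neutral_right) auto
  also have "\<dots> = G $$ (i,j)" using G i j by simp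
  finally show ?thesis .
qed

primrec msum :: "nat \<Rightarrow> complex mat list \<Rightarrow> complex mat" where
  "msum n [] = 0\<^sub>m n n"
| "msum n (x # xs) = x + msum n xs"

lemma msum_carrier: "set xs \<subseteq> carrier_mat n n \<Longrightarrow> msum n xs \<in> carrier_mat n n"
  by (induction xs) auto

lemma msum_index: "set xs \<subseteq> carrier_mat n n \<Longrightarrow> a < n \<Longrightarrow> b < n \<Longrightarrow>
  msum n xs $$ (a,b) = sum_list (map (\<lambda>M. M $$ (a,b)) xs)"
proof (induction xs)
  case (Cons x xs)
  thus ?case using msum_carrier[of xs n] by auto
qed simp

lemma lin_carrier: "linear_map_on n F \<Longrightarrow> A \<in> carrier_mat n n \<Longrightarrow> F A \<in> carrier_mat n n"
  unfolding linear_map_on_def by auto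
lemma lin_add: "linear_map_on n F \<Longrightarrow> A \<in> carrier_mat n n \<Longrightarrow> B \<in> carrier_mat n n \<Longrightarrow> F (A + B) = F A + F B"
  unfolding linear_map_on_def by auto
lemma lin_smult: "linear_map_on n F \<Longrightarrow> A \<in> carrier_mat n n \<Longrightarrow> F (c \<cdot>\<^sub>m A) = c \<cdot>\<^sub>m F A"
  unfolding linear_map_on_def by auto

lemma lin_zero: assumes F: "linear_map_on n F" shows "F (0\<^sub>m n n) = 0\<^sub>m n n"
proof -
  have "0\<^sub>m n n = (0::complex) \<cdot>\<^sub>m 0\<^sub>m n n" by (rule eq_matI) auto
  hence "F (0\<^sub>m n n) = 0 \<cdot>\<^sub>m F (0\<^sub>m n n)" using lin_smult[OF F, of "0\<^sub>m n n" 0] by simp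
  also have "\<dots> = 0\<^sub>m n n" using lin_carrier[OF F, of "0\<^sub>m n n"] by (intro eq_matI) auto
  finally show ?thesis .
qed

lemma minus_as_smult: "A \<in> carrier_mat n n \<Longrightarrow> B \<in> carrier_mat n n \<Longrightarrow> A - B = A + (-1 :: complex) \<cdot>\<^sub>m B"
  by (rule eq_matI) auto

lemma lin_minus: assumes F: "linear_map_on n F" and A: "A \<in> carrier_mat n n" and B: "B \<in> carrier_mat n n"
  shows "F (A - B) = F A - F B"
proof -
  have "F (A - B) = F A + (-1) \<cdot>\<^sub>m F B"
    using minus_as_smult[OF A B] lin_add[OF F A, of "(-1) \<cdot>\<^sub>m B"] lin_smult[OF F B] B by simp
  also have "\<dots> = F A - F B" using lin_carrier[OF F A] lin_carrier[OF F B] by (simp add: minus_as_smult)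
  finally show ?thesis .
qed

lemma lin_msum: assumes F: "linear_map_on n F"
  shows "set xs \<subseteq> carrier_mat n n \<Longrightarrow> F (msum n xs) = msum n (map F xs)"
proof (induction xs)
  case Nil thus ?case using lin_zero[OF F] by simp
next
  case (Cons x xs)
  thus ?case using lin_add[OF F, of x "msum n xs"] msum_carrier[of xs n] by simp
qed

lemma tn_msum: "set xs \<subseteq> carrier_mat n n \<Longrightarrow> trace_norm (msum n xs) \<le> sum_list (map trace_norm xs)"
proof (induction xs)
  case Nil thus ?case using tn_zero by simp
next
  case (Cons x xs)
  hence "trace_norm (msum n (x # xs)) \<le> trace_norm x + trace_norm (msum n xs)"
    using msum_carrier[of xs n] tn_triangle[of x n "msum n xs"] by simp
  thus ?case using Cons by simp
qed

lemma mtrace_msum: assumes X: "X \<in> carrier_mat n n"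
  shows "set xs \<subseteq> carrier_mat n n \<Longrightarrow> mtrace (X * msum n xs) = sum_list (map (\<lambda>M. mtrace (X * M)) xs)"
proof (induction xs)
  case Nil thus ?case using X by (simp add: mtrace_def)
next
  case (Cons x xs)
  have "X * (x + msum n xs) = X * x + X * msum n xs"
    using X Cons.prems msum_carrier[of xs n] by (intro mult_add_distrib_mat[of _ n n _ n]) auto
  hence "mtrace (X * msum n (x # xs)) = mtrace (X * x) + mtrace (X * msum n xs)"
    using X Cons.prems msum_carrier[of xs n] by (simp add: mtrace_add[where n=n])
  thus ?case using Cons by simp
qed

definition pairs :: "nat \<Rightarrow> (nat \<times> nat) list" where
  "pairs n = List.product [0..<n] [0..<n]"

lemma sum_list_pairs: "sum_list (map f (pairs n)) = (\<Sum>p\<in>{..<n} \<times> {..<n}. f p)"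
proof -
  have "distinct (pairs n)" unfolding pairs_def by (simp add: distinct_product)
  hence "sum_list (map f (pairs n)) = sum f (set (pairs n))" by (rule sum_list_distinct_conv_sum_set)
  also have "set (pairs n) = {..<n} \<times> {..<n}" unfolding pairs_def by auto
  finally show ?thesis .
qed

lemma set_pairs: "p \<in> set (pairs n) \<longleftrightarrow> fst p < n \<and> snd p < n"
  unfolding pairs_def by (cases p) auto

definition decomp :: "nat \<Rightarrow> complex mat \<Rightarrow> complex mat list" where
  "decomp n A = map (\<lambda>(i,j). A $$ (i,j) \<cdot>\<^sub>m E n i j) (pairs n)"

lemma decomp_carrier: "set (decomp n A) \<subseteq> carrier_mat n n"
  unfolding decomp_def by auto

lemma decomp_eq: assumes A: "A \<in> carrier_mat n n" shows "msum n (decomp n A) = A"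
proof (rule eq_matI)
  fix a b assume "a < dim_row A" "b < dim_col A"
  hence a: "a < n" and b: "b < n" using A by auto
  have "msum n (decomp n A) $$ (a,b) = sum_list (map (\<lambda>M. M $$ (a,b)) (decomp n A))"
    using decomp_carrier a b by (rule msum_index)
  also have "\<dots> = sum_list (map (\<lambda>(i,j). A $$ (i,j) * (if a = i \<and> b = j then 1 else 0)) (pairs n))"
    unfolding decomp_def map_map
    by (intro arg_cong[where f=sum_list] map_cong) (auto simp: set_pairs E_index a b)
  also have "\<dots> = (\<Sum>p\<in>{..<n} \<times> {..<n}. (\<lambda>(i,j). A $$ (i,j) * (if a = i \<and> b = j then 1 else 0)) p)"
    by (rule sum_list_pairs)
  also have "\<dots> = (\<Sum>p\<in>{(a,b)}. (\<lambda>(i,j). A $$ (i,j) * (if a = i \<and> b = j then 1 else 0)) p)"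
    by (rule sum.mono_neutral_right) (use a b in \<open>auto split: if_splits\<close>)
  also have "\<dots> = A $$ (a,b)" by simp
  finally show "msum n (decomp n A) $$ (a,b) = A $$ (a,b)" .
qed (use A msum_carrier[OF decomp_carrier] in auto)

lemma lin_bound: assumes F: "linear_map_on n F"
  shows "\<exists>C \<ge> 0. \<forall>A \<in> carrier_mat n n. trace_norm (F A) \<le> C * trace_norm A"
proof -
  define C where "C = (\<Sum>p\<in>{..<n} \<times> {..<n}. trace_norm (F (E n (fst p) (snd p))))"
  have C0: "C \<ge> 0" unfolding C_def by (intro sum_nonneg tn_nonneg[OF lin_carrier[OF F]]) simp
  have "trace_norm (F A) \<le> C * trace_norm A" if A: "A \<in> carrier_mat n n" for A
  proof -
    have "F A = msum n (map F (decomp n A))" using lin_msum[OF F decomp_carrier[of n A]] decomp_eq[OF A] by simp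
    hence "trace_norm (F A) \<le> sum_list (map trace_norm (map F (decomp n A)))"
      using tn_msum[of "map F (decomp n A)" n] lin_carrier[OF F] decomp_carrier by auto
    also have "\<dots> = sum_list (map (\<lambda>p. cmod (A $$ (fst p, snd p)) * trace_norm (F (E n (fst p) (snd p)))) (pairs n))"
      unfolding decomp_def map_map
      by (intro arg_cong[where f=sum_list] map_cong) (auto simp: lin_smult[OF F] tn_smult[OF lin_carrier[OF F]])
    also have "\<dots> = (\<Sum>p\<in>{..<n} \<times> {..<n}. cmod (A $$ (fst p, snd p)) * trace_norm (F (E n (fst p) (snd p))))"
      by (rule sum_list_pairs)
    also have "\<dots> \<le> (\<Sum>p\<in>{..<n} \<times> {..<n}. trace_norm A * trace_norm (F (E n (fst p) (snd p))))"
      by (intro sum_mono mult_right_mono entry_bound[OF A]) (auto intro!: tn_nonneg[OF lin_carrier[OF F]])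
    also have "\<dots> = C * trace_norm A" unfolding C_def by (simp add: sum_distrib_left mult.commute)
    finally show ?thesis .
  qed
  thus ?thesis using C0 by blast
qed

lemma ratio_sup:
  assumes C: "\<And>s. s \<in> carrier_mat n n \<Longrightarrow> trace_norm (G s) \<le> C * trace_norm s"
  and G0: "G (0\<^sub>m n n) = 0\<^sub>m n n"
  and T: "T = insert 0 {trace_norm (G s) / trace_norm s | s. s \<in> carrier_mat n n \<and> s \<noteq> 0\<^sub>m n n \<and> P s}"
  shows "Sup T \<ge> 0" "\<And>s. s \<in> carrier_mat n n \<Longrightarrow> P s \<Longrightarrow> trace_norm (G s) \<le> Sup T * trace_norm s"
proof -
  have bdd: "bdd_above T"
  proof (rule bdd_aboveI[of _ "max 0 C"])
    fix x assume "x \<in> T"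
    then consider "x = 0" | s where "s \<in> carrier_mat n n" "s \<noteq> 0\<^sub>m n n" "x = trace_norm (G s) / trace_norm s"
      unfolding T by auto
    thus "x \<le> max 0 C"
    proof cases
      case 2
      hence p: "trace_norm s > 0" by (intro tn_pos) auto
      have "C * trace_norm s \<le> max 0 C * trace_norm s" by (rule mult_right_mono) (use p in auto)
      hence "trace_norm (G s) \<le> max 0 C * trace_norm s" using C[OF 2(1)] by linarith
      thus ?thesis using p 2(3) by (simp add: divide_le_eq)
    qed simp
  qed
  show "Sup T \<ge> 0" using bdd by (rule cSup_upper[rotated]) (simp add: T)
  fix s assume s: "s \<in> carrier_mat n n" "P s"
  show "trace_norm (G s) \<le> Sup T * trace_norm s"
  proof (cases "s = 0\<^sub>m n n")
    case True thus ?thesis using G0 tn_zero by simp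
  next
    case False
    hence p: "trace_norm s > 0" using s by (intro tn_pos) auto
    have "trace_norm (G s) / trace_norm s \<in> T" unfolding T using s False by blast
    hence "trace_norm (G s) / trace_norm s \<le> Sup T" using bdd by (rule cSup_upper)
    thus ?thesis using p by (simp add: divide_le_eq)
  qed
qed

lemma n11_bound: assumes G: "linear_map_on n G"
  shows "norm_1to1 n G \<ge> 0" "\<And>s. s \<in> carrier_mat n n \<Longrightarrow> trace_norm (G s) \<le> norm_1to1 n G * trace_norm s"
proof -
  obtain C where C: "\<And>s. s \<in> carrier_mat n n \<Longrightarrow> trace_norm (G s) \<le> C * trace_norm s"
    using lin_bound[OF G] by blast
  have T: "insert 0 {trace_norm (G s) / trace_norm s | s. s \<in> carrier_mat n n \<and> s \<noteq> 0\<^sub>m n n}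
     = insert 0 {trace_norm (G s) / trace_norm s | s. s \<in> carrier_mat n n \<and> s \<noteq> 0\<^sub>m n n \<and> True}" by simp
  note R = ratio_sup[OF C lin_zero[OF G] T]
  show "norm_1to1 n G \<ge> 0" using R(1) unfolding norm_1to1_def .
  fix s :: "complex mat" assume "s \<in> carrier_mat n n"
  thus "trace_norm (G s) \<le> norm_1to1 n G * trace_norm s" using R(2) unfolding norm_1to1_def by blast
qed

lemma erg_bound: assumes G: "linear_map_on n G"
  shows "ergodicity_coeff n G \<ge> 0"
    "\<And>s. s \<in> carrier_mat n n \<Longrightarrow> mtrace s = 0 \<Longrightarrow> trace_norm (G s) \<le> ergodicity_coeff n G * trace_norm s"
proof -
  obtain C where C: "\<And>s. s \<in> carrier_mat n n \<Longrightarrow> trace_norm (G s) \<le> C * trace_norm s"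
    using lin_bound[OF G] by blast
  note R = ratio_sup[OF C lin_zero[OF G] refl, where P="\<lambda>s. mtrace s = 0"]
  show "ergodicity_coeff n G \<ge> 0" using R(1) unfolding ergodicity_coeff_def .
  fix s :: "complex mat" assume "s \<in> carrier_mat n n" "mtrace s = 0"
  thus "trace_norm (G s) \<le> ergodicity_coeff n G * trace_norm s" using R(2) unfolding ergodicity_coeff_def by blast
qed

lemma lin_diff: assumes F1: "linear_map_on n F1" and F2: "linear_map_on n F2"
  shows "linear_map_on n (\<lambda>X. F1 X - F2 X)"
proof -
  have "F1 A - F2 A \<in> carrier_mat n n" if "A \<in> carrier_mat n n" for A
    using lin_carrier[OF F1 that] lin_carrier[OF F2 that] by (metis minus_carrier_mat)
  moreover have "F1 (A + B) - F2 (A + B) = (F1 A - F2 A) + (F1 B - F2 B)"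
    if A: "A \<in> carrier_mat n n" and B: "B \<in> carrier_mat n n" for A B
    unfolding lin_add[OF F1 A B] lin_add[OF F2 A B]
    using lin_carrier[OF F1 A] lin_carrier[OF F2 A] lin_carrier[OF F1 B] lin_carrier[OF F2 B]
    by (intro eq_matI) auto
  moreover have "F1 (c \<cdot>\<^sub>m A) - F2 (c \<cdot>\<^sub>m A) = c \<cdot>\<^sub>m (F1 A - F2 A)" if A: "A \<in> carrier_mat n n" for A c
    unfolding lin_smult[OF F1 A] lin_smult[OF F2 A]
    using lin_carrier[OF F1 A] lin_carrier[OF F2 A]
    by (intro eq_matI) (auto simp: algebra_simps)
  ultimately show ?thesis unfolding linear_map_on_def by blast
qed

lemma dual_prop: assumes F: "linear_map_on n F" and X: "X \<in> carrier_mat n n"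
  shows "dual_map n F X \<in> carrier_mat n n \<and> (\<forall>B \<in> carrier_mat n n. mtrace (X * F B) = mtrace (dual_map n F X * B))"
proof -
  define P where "P = (\<lambda>G. G \<in> carrier_mat n n \<and> (\<forall>B \<in> carrier_mat n n. mtrace (X * F B) = mtrace (G * B)))"
  define G0 where "G0 = mat n n (\<lambda>(i,j). mtrace (X * F (E n j i)))"
  have G0c: "G0 \<in> carrier_mat n n" unfolding G0_def by simp
  have "mtrace (X * F B) = mtrace (G0 * B)" if B: "B \<in> carrier_mat n n" for B
  proof -
    have "mtrace (X * F B) = mtrace (X * msum n (map F (decomp n B)))"
      using lin_msum[OF F decomp_carrier[of n B]] decomp_eq[OF B] by simp
    also have "\<dots> = sum_list (map (\<lambda>M. mtrace (X * M)) (map F (decomp n B)))"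
      using X lin_carrier[OF F] decomp_carrier[of n B] by (intro mtrace_msum) auto
    also have "\<dots> = sum_list (map (\<lambda>p. B $$ (fst p, snd p) * mtrace (X * F (E n (fst p) (snd p)))) (pairs n))"
      unfolding decomp_def map_map
      by (intro arg_cong[where f=sum_list] map_cong)
         (auto simp: lin_smult[OF F] smult_mult_right[OF lin_carrier[OF F] X] mtrace_smult[where n=n] mcarr[where n=n] lin_carrier[OF F] X)
    also have "\<dots> = (\<Sum>p\<in>{..<n} \<times> {..<n}. B $$ (fst p, snd p) * mtrace (X * F (E n (fst p) (snd p))))"
      by (rule sum_list_pairs)
    also have "\<dots> = (\<Sum>k<n. \<Sum>i<n. B $$ (k, i) * mtrace (X * F (E n k i)))"
      by (subst sum.cartesian_product) (auto intro!: sum.cong)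
    also have "\<dots> = (\<Sum>i<n. \<Sum>k<n. G0 $$ (i,k) * B $$ (k,i))"
      unfolding G0_def by (subst sum.swap) (auto intro!: sum.cong)
    also have "\<dots> = mtrace (G0 * B)"
      unfolding mtrace_def using G0c B by (simp add: mult_entry del: index_mult_mat(1))
    finally show ?thesis .
  qed
  hence PG0: "P G0" unfolding P_def using G0c by blast
  have uniq: "G = G0" if "P G" for G
  proof (rule eq_matI)
    have Gc: "G \<in> carrier_mat n n" using that unfolding P_def by auto
    fix i j assume "i < dim_row G0" "j < dim_col G0"
    hence i: "i < n" and j: "j < n" using G0c by auto
    have "G $$ (i,j) = mtrace (G * E n j i)" using mtrace_E[OF Gc i j] by simp
    also have "\<dots> = mtrace (G0 * E n j i)" using that PG0 unfolding P_def by (metis E_carrier)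
    also have "\<dots> = G0 $$ (i,j)" using mtrace_E[OF G0c i j] by simp
    finally show "G $$ (i,j) = G0 $$ (i,j)" .
  qed (use that G0c in \<open>auto simp: P_def\<close>)
  have "P (THE G. P G)" using PG0 uniq by (rule theI)
  thus ?thesis unfolding dual_map_def P_def[symmetric] unfolding P_def .
qed

lemma mmd_l: "A \<in> carrier_mat n n \<Longrightarrow> B \<in> carrier_mat n n \<Longrightarrow> (C :: complex mat) \<in> carrier_mat n n \<Longrightarrow> (A - B) * C = A * C - B * C"
  by (rule minus_mult_distrib_mat)
lemma mmd_r: "A \<in> carrier_mat n n \<Longrightarrow> B \<in> carrier_mat n n \<Longrightarrow> (C :: complex mat) \<in> carrier_mat n n \<Longrightarrow> C * (A - B) = C * A - C * B"
  by (rule mult_minus_distrib_mat)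

theorem mainTheorem6:
  fixes D :: nat and F1 F2 :: "complex mat \<Rightarrow> complex mat" and \<rho>1 \<xi> :: "complex mat" and k :: real
  assumes cp1: "completely_positive D F1" and cp2: "completely_positive D F2"
    and sr1: "map_spectral_radius D F1 = 1" and sr2: "map_spectral_radius D F2 = 1"
    and tp1: "trace_preserving D F1"
    and tau: "ergodicity_coeff D F1 < 1"
    and rho: "density D \<rho>1" and fix1: "F1 \<rho>1 = \<rho>1"
    and xi: "\<xi> \<in> carrier_mat D D" and fix2: "dual_map D F2 \<xi> = \<xi>"
    and norm: "mtrace (\<rho>1 * \<xi>) = 1"
    and kdef: "k = (1 + ergodicity_coeff D F1) / (1 - ergodicity_coeff D F1)
                   * norm_1to1 D (\<lambda>X. F1 X - F2 X)"
    and k1: "k < 1"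
  shows "op_norm (1\<^sub>m D - \<xi>) \<le> k / (1 - k)"
proof -
  have F1: "linear_map_on D F1" using cp1 unfolding completely_positive_def by auto
  have F2: "linear_map_on D F2" using cp2 unfolding completely_positive_def by auto
  define G where "G = (\<lambda>X. F1 X - F2 X)"
  have Gl: "linear_map_on D G" unfolding G_def by (rule lin_diff[OF F1 F2])
  have Gc: "\<And>s. s \<in> carrier_mat D D \<Longrightarrow> G s \<in> carrier_mat D D" using lin_carrier[OF Gl] .
  have F1c: "\<And>s. s \<in> carrier_mat D D \<Longrightarrow> F1 s \<in> carrier_mat D D" using lin_carrier[OF F1] .
  have F2c: "\<And>s. s \<in> carrier_mat D D \<Longrightarrow> F2 s \<in> carrier_mat D D" using lin_carrier[OF F2] .
  define t where "t = ergodicity_coeff D F1"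
  define e where "e = norm_1to1 D G"
  have kd: "k = (1 + t) / (1 - t) * e" unfolding kdef t_def e_def G_def ..
  have t0: "t \<ge> 0" unfolding t_def by (rule erg_bound(1)[OF F1])
  have t1: "t < 1" unfolding t_def by (rule tau)
  have ht: "\<And>s. s \<in> carrier_mat D D \<Longrightarrow> mtrace s = 0 \<Longrightarrow> trace_norm (F1 s) \<le> t * trace_norm s"
    unfolding t_def by (rule erg_bound(2)[OF F1])
  have e0: "e \<ge> 0" unfolding e_def by (rule n11_bound(1)[OF Gl])
  have he: "\<And>s. s \<in> carrier_mat D D \<Longrightarrow> trace_norm (G s) \<le> e * trace_norm s"
    unfolding e_def by (rule n11_bound(2)[OF Gl])
  have k0: "k \<ge> 0" unfolding kd using t0 t1 e0 by simp
  have rc: "\<rho>1 \<in> carrier_mat D D" and trr: "mtrace \<rho>1 = 1"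
    using rho unfolding density_def psd_def by auto
  have tp: "\<And>s. s \<in> carrier_mat D D \<Longrightarrow> mtrace (F1 s) = mtrace s"
    using tp1 unfolding trace_preserving_def by auto
  have dp: "\<And>B. B \<in> carrier_mat D D \<Longrightarrow> mtrace (\<xi> * F2 B) = mtrace (\<xi> * B)"
    using dual_prop[OF F2 xi] fix2 by simp
  define \<eta> where "\<eta> = 1\<^sub>m D - \<xi>"
  have ec: "\<eta> \<in> carrier_mat D D" unfolding \<eta>_def using xi by (rule minus_carrier_mat)
  define M where "M = op_norm \<eta>"
  have M0: "M \<ge> 0" unfolding M_def by (rule op_norm_nonneg)
  define phi where "phi = (\<lambda>s. mtrace (s * \<eta>))"
  have phib: "\<And>s. s \<in> carrier_mat D D \<Longrightarrow> cmod (phi s) \<le> trace_norm s * M"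
    unfolding phi_def M_def using ec by (intro T1) auto
  have phi_eq: "\<And>s. s \<in> carrier_mat D D \<Longrightarrow> phi s = mtrace s - mtrace (s * \<xi>)"
  proof -
    fix s :: "complex mat" assume s: "s \<in> carrier_mat D D"
    have "s * \<eta> = s * 1\<^sub>m D - s * \<xi>" unfolding \<eta>_def using s xi by (intro mmd_r) auto
    thus "phi s = mtrace s - mtrace (s * \<xi>)" unfolding phi_def using s xi
      by (simp add: mtrace_minus[where n=D])
  qed
  have key: "\<And>s. s \<in> carrier_mat D D \<Longrightarrow> phi s = phi (F1 s) + mtrace (G s * \<xi>)"
  proof -
    fix s :: "complex mat" assume s: "s \<in> carrier_mat D D"
    have "mtrace (s * \<xi>) = mtrace (\<xi> * s)" using s xi by (rule mtrace_cyclic)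
    also have "\<dots> = mtrace (\<xi> * F2 s)" using dp[OF s] by simp
    also have "\<dots> = mtrace (F2 s * \<xi>)" using F2c[OF s] xi by (intro mtrace_cyclic)
    finally have a: "mtrace (s * \<xi>) = mtrace (F2 s * \<xi>)" .
    have b: "mtrace (G s * \<xi>) = mtrace (F1 s * \<xi>) - mtrace (F2 s * \<xi>)"
      unfolding G_def using F1c[OF s] F2c[OF s] xi
      by (simp add: mmd_l[where n=D] mtrace_minus[where n=D])
    show "phi s = phi (F1 s) + mtrace (G s * \<xi>)"
      unfolding phi_eq[OF s] phi_eq[OF F1c[OF s]] tp[OF s] a b by simp
  qed
  have gb: "\<And>s. s \<in> carrier_mat D D \<Longrightarrow> cmod (mtrace (G s * \<xi>)) \<le> e * (1 + M) * trace_norm s"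
  proof -
    fix s :: "complex mat" assume s: "s \<in> carrier_mat D D"
    have "mtrace (G s * \<xi>) = mtrace (G s) - phi (G s)" using phi_eq[OF Gc[OF s]] by simp
    hence "cmod (mtrace (G s * \<xi>)) \<le> cmod (mtrace (G s)) + cmod (phi (G s))"
      by (simp add: norm_triangle_ineq4)
    also have "\<dots> \<le> trace_norm (G s) + trace_norm (G s) * M"
      using tr_bound[OF Gc[OF s]] phib[OF Gc[OF s]] by simp
    also have "\<dots> = trace_norm (G s) * (1 + M)" by (simp add: algebra_simps)
    also have "\<dots> \<le> e * trace_norm s * (1 + M)" using he[OF s] M0 by (intro mult_right_mono) auto
    finally show "cmod (mtrace (G s * \<xi>)) \<le> e * (1 + M) * trace_norm s" by (simp add: mult_ac)
  qed
  define T where "T = insert 0 {cmod (phi s) / trace_norm s | s. s \<in> carrier_mat D D \<and> s \<noteq> 0\<^sub>m D D \<and> mtrace s = 0}"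
  define A where "A = Sup T"
  have bddT: "bdd_above T"
  proof (rule bdd_aboveI[of _ M])
    fix x assume "x \<in> T"
    then consider "x = 0" | s where "s \<in> carrier_mat D D" "s \<noteq> 0\<^sub>m D D" "x = cmod (phi s) / trace_norm s"
      unfolding T_def by auto
    thus "x \<le> M"
    proof cases
      case 2
      hence "trace_norm s > 0" by (intro tn_pos) auto
      thus ?thesis using phib[OF 2(1)] 2(3) by (simp add: divide_le_eq mult.commute)
    qed (use M0 in simp)
  qed
  have A0: "A \<ge> 0" unfolding A_def using bddT by (rule cSup_upper[rotated]) (simp add: T_def)
  have hA: "\<And>s. s \<in> carrier_mat D D \<Longrightarrow> mtrace s = 0 \<Longrightarrow> cmod (phi s) \<le> A * trace_norm s"
  proof -
    fix s :: "complex mat" assume s: "s \<in> carrier_mat D D" and tr: "mtrace s = 0"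
    show "cmod (phi s) \<le> A * trace_norm s"
    proof (cases "s = 0\<^sub>m D D")
      case True thus ?thesis unfolding phi_def using ec by (simp add: mtrace_zero tn_zero)
    next
      case False
      hence p: "trace_norm s > 0" using s by (intro tn_pos) auto
      have "cmod (phi s) / trace_norm s \<in> T" unfolding T_def using s False tr by blast
      hence "cmod (phi s) / trace_norm s \<le> A" unfolding A_def using bddT by (rule cSup_upper)
      thus ?thesis using p by (simp add: divide_le_eq)
    qed
  qed
  have Ab: "A \<le> A * t + e * (1 + M)"
  proof -
    have "Sup T \<le> A * t + e * (1 + M)"
    proof (rule cSup_least)
      show "T \<noteq> {}" unfolding T_def by simp
      fix x assume "x \<in> T"
      then consider "x = 0" | s where "s \<in> carrier_mat D D" "s \<noteq> 0\<^sub>m D D" "mtrace s = 0" "x = cmod (phi s) / trace_norm s"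
        unfolding T_def by auto
      thus "x \<le> A * t + e * (1 + M)"
      proof cases
        case 1 thus ?thesis using A0 t0 e0 M0 by simp
      next
        case 2
        hence p: "trace_norm s > 0" by (intro tn_pos) auto
        have trF: "mtrace (F1 s) = 0" using tp[OF 2(1)] 2(3) by simp
        have "cmod (phi s) \<le> cmod (phi (F1 s)) + cmod (mtrace (G s * \<xi>))"
          unfolding key[OF 2(1)] by (rule norm_triangle_ineq)
        also have "\<dots> \<le> A * trace_norm (F1 s) + e * (1 + M) * trace_norm s"
          using hA[OF F1c[OF 2(1)] trF] gb[OF 2(1)] by simp
        also have "A * trace_norm (F1 s) \<le> A * (t * trace_norm s)"
          using ht[OF 2(1,3)] A0 by (rule mult_left_mono)
        finally have "cmod (phi s) \<le> (A * t + e * (1 + M)) * trace_norm s" by (simp add: algebra_simps)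
        thus ?thesis using p 2(4) by (simp add: divide_le_eq)
      qed
    qed
    thus ?thesis by (simp add: A_def)
  qed
  have Ab2: "A * (1 - t) \<le> e * (1 + M)" using Ab by (simp add: algebra_simps)
  have tpos: "1 - t > 0" using t1 by simp
  have phig: "cmod (phi s) \<le> k * (1 + M) * trace_norm s" if s: "s \<in> carrier_mat D D" for s
  proof -
    define s0 where "s0 = s - mtrace s \<cdot>\<^sub>m \<rho>1"
    have s0c: "s0 \<in> carrier_mat D D" unfolding s0_def by (rule minus_carrier_mat, rule smult_carrier_mat, rule rc)
    have trs0: "mtrace s0 = 0" unfolding s0_def using s rc trr by (simp add: mtrace_minus[where n=D] mtrace_smult[where n=D])
    have "trace_norm s0 \<le> trace_norm s + trace_norm (- mtrace s \<cdot>\<^sub>m \<rho>1)"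
    proof -
      have "s0 = s + (- mtrace s) \<cdot>\<^sub>m \<rho>1" unfolding s0_def using s rc by (intro eq_matI) auto
      thus ?thesis using tn_triangle[OF s, of "(- mtrace s) \<cdot>\<^sub>m \<rho>1"] rc by simp
    qed
    also have "trace_norm (- mtrace s \<cdot>\<^sub>m \<rho>1) = cmod (mtrace s)" using tn_smult[OF rc] tn_density[OF rho] by simp
    also have "cmod (mtrace s) \<le> trace_norm s" by (rule tr_bound[OF s])
    finally have tns0: "trace_norm s0 \<le> 2 * trace_norm s" by simp
    have F1s0: "F1 s0 = F1 s - mtrace s \<cdot>\<^sub>m \<rho>1"
      unfolding s0_def using lin_minus[OF F1 s, of "mtrace s \<cdot>\<^sub>m \<rho>1"] lin_smult[OF F1 rc] fix1 rc by simp
    have "phi (F1 s0) = phi (F1 s) - mtrace s * phi \<rho>1"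
    proof -
      have "(F1 s - mtrace s \<cdot>\<^sub>m \<rho>1) * \<eta> = F1 s * \<eta> - (mtrace s \<cdot>\<^sub>m \<rho>1) * \<eta>"
        using F1c[OF s] rc ec by (intro mmd_l) auto
      also have "(mtrace s \<cdot>\<^sub>m \<rho>1) * \<eta> = mtrace s \<cdot>\<^sub>m (\<rho>1 * \<eta>)" using rc ec by (rule smult_mult_left)
      finally show ?thesis unfolding phi_def F1s0 using F1c[OF s] rc ec
        by (simp add: mtrace_minus[where n=D] mtrace_smult[where n=D] mcarr[where n=D])
    qed
    moreover have "phi \<rho>1 = 0" using phi_eq[OF rc] trr norm by simp
    ultimately have pF: "phi (F1 s) = phi (F1 s0)" by simp
    have trF0: "mtrace (F1 s0) = 0" using tp[OF s0c] trs0 by simp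
    have "cmod (phi s) \<le> cmod (phi (F1 s0)) + cmod (mtrace (G s * \<xi>))"
      unfolding key[OF s] pF by (rule norm_triangle_ineq)
    also have "\<dots> \<le> A * trace_norm (F1 s0) + e * (1 + M) * trace_norm s"
      using hA[OF F1c[OF s0c] trF0] gb[OF s] by simp
    also have "A * trace_norm (F1 s0) \<le> A * (t * (2 * trace_norm s))"
    proof -
      have "trace_norm (F1 s0) \<le> t * trace_norm s0" by (rule ht[OF s0c trs0])
      also have "\<dots> \<le> t * (2 * trace_norm s)" using tns0 t0 by (rule mult_left_mono)
      finally show ?thesis using A0 by (rule mult_left_mono)
    qed
    finally have c1: "cmod (phi s) \<le> (2 * A * t + e * (1 + M)) * trace_norm s" by (simp add: algebra_simps)
    have "2 * A * t + e * (1 + M) \<le> k * (1 + M)"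
    proof -
      define Q where "Q = e * (1 + M)"
      have Q0: "Q \<ge> 0" unfolding Q_def using e0 M0 by simp
      have "A \<le> Q / (1 - t)" using Ab2 tpos unfolding Q_def by (simp add: pos_le_divide_eq)
      hence "2 * t * A \<le> 2 * t * (Q / (1 - t))" using t0 by (intro mult_left_mono) auto
      moreover have "Q + 2 * t * (Q / (1 - t)) = k * (1 + M)" unfolding kd Q_def using tpos
        by (simp add: field_simps)
      ultimately show ?thesis unfolding Q_def by (simp add: algebra_simps)
    qed
    hence "(2 * A * t + e * (1 + M)) * trace_norm s \<le> k * (1 + M) * trace_norm s"
      using tn_nonneg[OF s] by (rule mult_right_mono)
    with c1 show ?thesis by simp
  qed
  have "M \<le> k * (1 + M)" unfolding M_def
    using ec k0 M0 phig unfolding phi_def M_def by (intro dual_op_bound) auto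
  hence "M * (1 - k) \<le> k" by (simp add: algebra_simps)
  hence "M \<le> k / (1 - k)" using k1 by (simp add: pos_le_divide_eq)
  thus ?thesis unfolding M_def \<eta>_def .
qed

end
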